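(* Let $d,n$ be positive integers with $d+1\le 2^n$, let $0<\kappa_1\le\kappa_2$ be constants, and let $G\subset\mathbb{R}^d$ be a set all of whose points satisfy $\kappa_1\le\|\boldsymbol{x}\|\le\kappa_2$. Let $F:G\to\mathbb{C}^{2^n}$ be the amplitude encoding $$F(\boldsymbol{x})=|\bar{\boldsymbol{x}}\rangle=\gamma^{-1}(x_1,\dots,x_d,\tilde{x},0,\dots,0)^T,\qquad \tilde{x}=\frac{\|\boldsymbol{x}\|}{1+\|\boldsymbol{x}\|},\quad \gamma=(\|\boldsymbol{x}\|^2+\tilde{x}^2)^{1/2},$$ and let $\bar G=F(G)$, a subset of the unit sphere $\mathbb{S}$ of $\mathbb{C}_2^{\otimes n}\cong\mathbb{C}^{2^n}$. Let $\mu$ be a finite Borel measure on $\bar G$ and let $f:\bar G\to\mathbb{R}$ be an arbitrary square-integrable function on $\bar G$. For $n_s\in\mathbb{N}$, $\boldsymbol{z}_1,\dots,\boldsymbol{z}_{n_s}\in\mathbb{S}$, $\boldsymbol{a}\in\mathbb{R}_+^{n_s}$ (positive entries), $\boldsymbol{c}\in[0,1]^{n_s}$ and $\boldsymbol{\alpha}\in\mathbb{R}^{n_s}$ define $$q_{\boldsymbol{z}_1,\dots,\boldsymbol{z}_{n_s},\boldsymbol{a},\boldsymbol{c},\boldsymbol{\alpha}}(\bar{\boldsymbol{x}})=\sum_{j=1}^{n_s}\alpha_j\,\sigma\big(a_j(|\langle\bar{\boldsymbol{x}}|\boldsymbol{z}_j\rangle|^2-c_j)\big),\qquad \sigma(t)=\frac{1}{1+e^{-t}},$$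 and let $Q(\bar G)$ be the set of all such functions (over all choices of $n_s,\boldsymbol{z}_j,\boldsymbol{a},\boldsymbol{c},\boldsymbol{\alpha}$). Then $Q(\bar G)$ is dense in $L^2(\bar G,\mu)$: for every $\epsilon>0$ there exists $q\in Q(\bar G)$ with $$\int_{\bar G}|q(\bar{\boldsymbol{x}})-f(\bar{\boldsymbol{x}})|^2\,d\mu<\epsilon.$$
   Context: $\langle\bar{\boldsymbol{x}}|\boldsymbol{z}\rangle$ denotes the standard Hermitian inner product on $\mathbb{C}^{2^n}$; $\mathbb{S}$ is the set of unit vectors of $\mathbb{C}^{2^n}$. $L^2(\bar G,\mu)$ is the space of real-valued square-integrable functions on $\bar G$ with respect to $\mu$. *)

theory Defs
  imports "HOL-Analysis.Analysis"
begin

text \<open>Vectors of R^d are represented as functions nat => real vanishing at indices >= d;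
vectors of C^(2^n) as functions nat => complex vanishing at indices >= 2^n.\<close>

definition vnorm :: "nat \<Rightarrow> (nat \<Rightarrow> real) \<Rightarrow> real" where
  "vnorm d x = sqrt (\<Sum>i<d. (x i)\<^sup>2)"

definition amp_enc :: "nat \<Rightarrow> (nat \<Rightarrow> real) \<Rightarrow> (nat \<Rightarrow> complex)" where
  "amp_enc d x =
     (let r = vnorm d x; xt = r / (1 + r); \<gamma> = sqrt (r\<^sup>2 + xt\<^sup>2)
      in (\<lambda>i. if i < d then complex_of_real (x i / \<gamma>)
               else if i = d then complex_of_real (xt / \<gamma>) else 0))"

definition hinner :: "nat \<Rightarrow> (nat \<Rightarrow> complex) \<Rightarrow> (nat \<Rightarrow> complex) \<Rightarrow> complex" where
  "hinner N x z = (\<Sum>i<N. cnj (x i) * z i)"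

definition unit_sphere :: "nat \<Rightarrow> (nat \<Rightarrow> complex) set" where
  "unit_sphere N = {z. (\<forall>i\<ge>N. z i = 0) \<and> (\<Sum>i<N. (cmod (z i))\<^sup>2) = 1}"

definition sigmoid :: "real \<Rightarrow> real" where
  "sigmoid t = 1 / (1 + exp (- t))"

definition Qfam :: "nat \<Rightarrow> ((nat \<Rightarrow> complex) \<Rightarrow> real) set" where
  "Qfam N = {q. \<exists>(ns::nat) (zs::nat \<Rightarrow> nat \<Rightarrow> complex) (a::nat \<Rightarrow> real) (c::nat \<Rightarrow> real) (\<alpha>::nat \<Rightarrow> real).
      (\<forall>j<ns. zs j \<in> unit_sphere N \<and> 0 < a j \<and> 0 \<le> c j \<and> c j \<le> 1) \<and>
      q = (\<lambda>x. \<Sum>j<ns. \<alpha> j * sigmoid (a j * ((cmod (hinner N x (zs j)))\<^sup>2 - c j)))}"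

end

theory Submission
  imports Defs
begin
lemma exp_pos1: "(0::real) < 1 + exp t" by (simp add: add_pos_pos)
lemma sigmoid_pos: "0 < sigmoid t" unfolding sigmoid_def using exp_pos1[of "-t"] by simp
lemma sigmoid_lt1: "sigmoid t < 1" unfolding sigmoid_def using exp_pos1[of "-t"]
  by (simp add: divide_less_eq)
lemma sigmoid_upper: "sigmoid s \<le> exp s"
proof -
  have "sigmoid s = exp s / (exp s + 1)" unfolding sigmoid_def using exp_pos1[of "-s"]
    by (simp add: exp_minus field_simps)
  also have "\<dots> \<le> exp s" by (simp add: divide_le_eq add_pos_pos)
  finally show ?thesis .
qed
lemma sigmoid_lower: "1 - sigmoid s \<le> exp (- s)"
proof -
  have "1 - sigmoid s = exp (-s) / (1 + exp (-s))" unfolding sigmoid_def using exp_pos1[of "-s"]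
    by (simp add: field_simps)
  also have "\<dots> \<le> exp (-s)" using exp_pos1[of "-s"] by (simp add: divide_le_eq)
  finally show ?thesis .
qed
lemma sigmoid_const: assumes "0 \<le> s" shows "\<bar>1 - 2 * sigmoid s\<bar> \<le> s"
proof -
  have e: "exp (-s) \<le> 1" using assms by simp
  have e2: "1 - s \<le> exp (-s)" using exp_ge_add_one_self[of "-s"] by simp
  have p: "0 < 1 + exp (-s)" by (rule exp_pos1)
  have "2 * sigmoid s - 1 = (1 - exp (-s)) / (1 + exp (-s))" unfolding sigmoid_def using p
    by (simp add: field_simps)
  moreover have "0 \<le> (1 - exp (-s)) / (1 + exp (-s))" using e p by simp
  moreover have "(1 - exp (-s)) / (1 + exp (-s)) \<le> 1 - exp (-s)"
    using e p by (simp add: divide_le_eq mult_le_cancel_left1)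
  ultimately show ?thesis using e2 by linarith
qed

lemma sum_delta_le1: "(\<Sum>j<(m::nat). (if j = q then 1 else 0::real)) \<le> 1"
proof -
  have "(\<Sum>j<(m::nat). (if j = q then 1 else 0::real)) = (if q < m then 1 else 0)"
    by (induction m) auto
  thus ?thesis by simp
qed

lemma approx1d:
  fixes g :: "real \<Rightarrow> real"
  assumes cont: "continuous_on {0..1} g" and e: "0 < e"
  shows "\<exists>(ns::nat) a c \<alpha>. (\<forall>j<ns. 0 < a j \<and> 0 \<le> c j \<and> c j \<le> 1) \<and>
     (\<forall>t\<in>{0..1}. \<bar>g t - (\<Sum>j<ns. \<alpha> j * sigmoid (a j * (t - c j)))\<bar> < e)"
proof -
  have "uniformly_continuous_on {0..1} g"
    using compact_uniformly_continuous[OF cont] by simp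
  then obtain \<delta> where dpos: "\<delta> > 0" and dU: "\<And>s t. s \<in> {0..1} \<Longrightarrow> t \<in> {0..1} \<Longrightarrow>
      dist t s < \<delta> \<Longrightarrow> dist (g t) (g s) < e/8"
    unfolding uniformly_continuous_on_def using e by (metis divide_pos_pos zero_less_numeral)
  obtain m :: nat where m0: "m \<noteq> 0" and mi: "inverse (real m) < \<delta>"
    using real_arch_inverse[of \<delta>] dpos by auto
  have mpos: "real m > 0" using m0 by simp
  have m1: "real m \<ge> 1" using m0 by simp
  define A where "A = real m * (ln (real m) + 1)"
  have lnm: "ln (real m) \<ge> 0" using m1 by simp
  have Apos: "A > 0" unfolding A_def using mpos lnm by (simp add: add_nonneg_pos)
  have Am: "exp (- (A / real m)) \<le> 1 / real m"
  proof -
    have "A / real m = ln (real m) + 1" unfolding A_def using mpos by simp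
    hence "exp (- (A / real m)) = exp (- ln (real m)) * exp (-1)"
      by (simp add: exp_add[symmetric])
    also have "\<dots> = (1 / real m) * exp (-1)" using mpos by (simp add: exp_minus inverse_eq_divide)
    also have "\<dots> \<le> 1 / real m" using mpos by (simp add: divide_right_mono)
    finally show ?thesis .
  qed
  define b where "b = min 1 (e / (8 * (\<bar>g 0\<bar> + 1)))"
  have bpos: "b > 0" unfolding b_def using e by (simp add: add_nonneg_pos)
  have gb: "\<bar>g 0\<bar> * b \<le> e / 8"
  proof -
    have "\<bar>g 0\<bar> * b \<le> \<bar>g 0\<bar> * (e / (8 * (\<bar>g 0\<bar> + 1)))"
      unfolding b_def by (intro mult_left_mono) auto
    also have "\<dots> = (e/8) * (\<bar>g 0\<bar> / (\<bar>g 0\<bar> + 1))" by (simp add: field_simps)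
    also have "\<dots> \<le> (e/8) * 1" using e by (intro mult_left_mono) auto
    finally show ?thesis by simp
  qed
  define \<Delta> where "\<Delta> j = g (real (Suc j) / real m) - g (real j / real m)" for j
  define cc where "cc j = (real j + 1/2) / real m" for j :: nat
  have \<Delta>b: "\<bar>\<Delta> j\<bar> < e/8" if "j < m" for j
  proof -
    have "real (Suc j) / real m \<in> {0..1}" "real j / real m \<in> {0..1}"
      using that mpos by (auto simp: divide_le_eq)
    moreover have "dist (real (Suc j) / real m) (real j / real m) < \<delta>"
      using mi mpos by (simp add: dist_real_def diff_divide_distrib[symmetric] inverse_eq_divide)
    ultimately show ?thesis using dU unfolding \<Delta>_def dist_real_def by blast
  qed
  have ccb: "0 \<le> cc j \<and> cc j \<le> 1" if "j < m" for j
  proof -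
    have "real j + 1/2 \<le> real m" using that by linarith
    thus ?thesis unfolding cc_def using mpos by (simp add: divide_le_eq)
  qed
  define a where "a j = (if j = 0 then b else A)" for j :: nat
  define c where "c j = (if j = 0 then 0 else cc (j - 1))" for j
  define \<alpha> where "\<alpha> j = (if j = 0 then 2 * g 0 else \<Delta> (j - 1))" for j
  have P1: "\<forall>j<Suc m. 0 < a j \<and> 0 \<le> c j \<and> c j \<le> 1"
    using ccb bpos Apos unfolding a_def c_def by auto
  have P2: "\<bar>g t - (\<Sum>j<Suc m. \<alpha> j * sigmoid (a j * (t - c j)))\<bar> < e" if t: "t \<in> {0..1}" for t
  proof -
    have sumeq: "(\<Sum>j<Suc m. \<alpha> j * sigmoid (a j * (t - c j))) =
       2 * g 0 * sigmoid (b * t) + (\<Sum>j<m. \<Delta> j * sigmoid (A * (t - cc j)))"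
      unfolding sum.lessThan_Suc_shift by (simp add: a_def c_def \<alpha>_def)
    define p where "p = nat \<lfloor>t * real m + 1/2\<rfloor>"
    have fl: "real_of_int \<lfloor>t * real m + 1/2\<rfloor> \<le> t * real m + 1/2"
         "t * real m + 1/2 < real_of_int \<lfloor>t * real m + 1/2\<rfloor> + 1" by linarith+
    have tm: "0 \<le> t * real m" "t * real m \<le> real m" using t mpos by auto
    have fl0: "0 \<le> \<lfloor>t * real m + 1/2\<rfloor>" using tm by simp
    have rp: "real p = real_of_int \<lfloor>t * real m + 1/2\<rfloor>" unfolding p_def using fl0 by simp
    have p1: "real p - 1/2 \<le> t * real m" "t * real m < real p + 1/2" using fl rp by linarith+
    have pm: "p \<le> m" using p1 tm by linarith
    have pm01: "real p / real m \<in> {0..1}" using pm mpos by (auto simp: divide_le_eq)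
    have T1: "\<bar>g t - g (real p / real m)\<bar> < e/8"
    proof -
      have eq: "t - real p / real m = (t * real m - real p) / real m" using mpos by (simp add: field_simps)
      have "\<bar>t * real m - real p\<bar> \<le> 1/2" using p1 by linarith
      hence "\<bar>t * real m - real p\<bar> / real m \<le> (1/2) / real m" using mpos by (intro divide_right_mono) auto
      hence "\<bar>t - real p / real m\<bar> \<le> 1 / (2 * real m)" unfolding eq by simp
      also have "\<dots> < \<delta>" using mi mpos by (simp add: inverse_eq_divide field_simps)
      finally show ?thesis using dU[OF pm01 t] by (simp add: dist_real_def)
    qed
    have tele: "g (real p / real m) = g 0 + (\<Sum>j<m. (if j < p then \<Delta> j else 0))"
    proof -
      have "(\<Sum>j<p. \<Delta> j) = g (real p / real m) - g (real 0 / real m)"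
        unfolding \<Delta>_def by (rule sum_lessThan_telescope)
      moreover have "(\<Sum>j<m. (if j < p then \<Delta> j else 0)) = (\<Sum>j<p. \<Delta> j)"
      proof -
        have "(\<Sum>j<m. (if j < p then \<Delta> j else 0)) = (\<Sum>j\<in>{..<m} \<inter> {j. j < p}. \<Delta> j)"
          by (simp add: sum.inter_restrict)
        also have "{..<m} \<inter> {j. j < p} = {..<p}" using pm by auto
        finally show ?thesis .
      qed
      ultimately show ?thesis by simp
    qed
    define w where "w j = 1 / real m + (if j = p - 1 then 1 else 0) + (if j = p then 1 else 0)" for j
    have wb: "\<bar>(if j < p then 1 else 0) - sigmoid (A * (t - cc j))\<bar> \<le> w j" if "j < m" for j
    proof (cases "j = p - 1 \<or> j = p")
      case True
      have "\<bar>(if j < p then 1 else 0) - sigmoid (A * (t - cc j))\<bar> \<le> 1"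
        using sigmoid_pos[of "A * (t - cc j)"] sigmoid_lt1[of "A * (t - cc j)"] by auto
      moreover have "1 \<le> w j" using True mpos unfolding w_def
        by (auto simp: add_nonneg_nonneg)
      ultimately show ?thesis by linarith
    next
      case False
      show ?thesis
      proof (cases "j < p")
        case True
        with False have "j + 2 \<le> p" by auto
        hence "real j + 2 \<le> real p" by linarith
        hence "t - cc j \<ge> 1 / real m" using p1 mpos unfolding cc_def by (simp add: field_simps)
        hence "A * (t - cc j) \<ge> A / real m" using Apos
          by (metis mult_left_mono less_imp_le times_divide_eq_right mult.right_neutral)
        hence "exp (- (A * (t - cc j))) \<le> exp (- (A / real m))" by simp
        hence "1 - sigmoid (A * (t - cc j)) \<le> 1 / real m"
          using sigmoid_lower[of "A * (t - cc j)"] Am by linarith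
        moreover have "sigmoid (A * (t - cc j)) < 1" by (rule sigmoid_lt1)
        ultimately show ?thesis using True unfolding w_def by auto
      next
        case False2: False
        with False have "p + 1 \<le> j" by auto
        hence "real p + 1 \<le> real j" by linarith
        hence "cc j - t \<ge> 1 / real m" using p1 mpos unfolding cc_def by (simp add: field_simps)
        hence "A * (cc j - t) \<ge> A / real m" using Apos
          by (metis mult_left_mono less_imp_le times_divide_eq_right mult.right_neutral)
        hence "exp (A * (t - cc j)) \<le> exp (- (A / real m))" by (simp add: algebra_simps)
        hence "sigmoid (A * (t - cc j)) \<le> 1 / real m"
          using sigmoid_upper[of "A * (t - cc j)"] Am by linarith
        moreover have "sigmoid (A * (t - cc j)) > 0" by (rule sigmoid_pos)
        ultimately show ?thesis using False2 unfolding w_def by auto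
      qed
    qed
    have wsum: "(\<Sum>j<m. w j) \<le> 3"
    proof -
      have "(\<Sum>j<m. w j) = (\<Sum>j<m. 1 / real m) + (\<Sum>j<m. (if j = p - 1 then 1 else 0::real))
            + (\<Sum>j<m. (if j = p then 1 else 0::real))"
        unfolding w_def by (simp add: sum.distrib)
      also have "(\<Sum>j<m. 1 / real m) = 1" using mpos by simp
      finally show ?thesis using sum_delta_le1[where m=m and q="p - 1"] sum_delta_le1[where m=m and q=p] by linarith
    qed
    have T3: "\<bar>\<Sum>j<m. \<Delta> j * ((if j < p then 1 else 0) - sigmoid (A * (t - cc j)))\<bar> \<le> 3 * (e/8)"
    proof -
      have "\<bar>\<Sum>j<m. \<Delta> j * ((if j < p then 1 else 0) - sigmoid (A * (t - cc j)))\<bar>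
          \<le> (\<Sum>j<m. \<bar>\<Delta> j * ((if j < p then 1 else 0) - sigmoid (A * (t - cc j)))\<bar>)"
        by (rule sum_abs)
      also have "\<dots> \<le> (\<Sum>j<m. (e/8) * w j)"
      proof (rule sum_mono)
        fix j assume "j \<in> {..<m}"
        hence j: "j < m" by simp
        show "\<bar>\<Delta> j * ((if j < p then 1 else 0) - sigmoid (A * (t - cc j)))\<bar> \<le> (e/8) * w j"
          unfolding abs_mult using \<Delta>b[OF j] wb[OF j]
          by (intro mult_mono) auto
      qed
      also have "\<dots> = (e/8) * (\<Sum>j<m. w j)" by (simp add: sum_distrib_left)
      also have "\<dots> \<le> (e/8) * 3" using wsum e by (intro mult_left_mono) auto
      finally show ?thesis by simp
    qed
    have T2: "\<bar>g 0 * (1 - 2 * sigmoid (b * t))\<bar> \<le> e/8"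
    proof -
      have "\<bar>1 - 2 * sigmoid (b * t)\<bar> \<le> b * t" using bpos t by (intro sigmoid_const) auto
      also have "\<dots> \<le> b" using bpos t by (simp add: mult_le_cancel_left1)
      finally have "\<bar>g 0 * (1 - 2 * sigmoid (b * t))\<bar> \<le> \<bar>g 0\<bar> * b"
        unfolding abs_mult by (intro mult_left_mono) auto
      thus ?thesis using gb by linarith
    qed
    have decomp: "g t - (2 * g 0 * sigmoid (b * t) + (\<Sum>j<m. \<Delta> j * sigmoid (A * (t - cc j))))
       = (g t - g (real p / real m)) + g 0 * (1 - 2 * sigmoid (b * t))
         + (\<Sum>j<m. \<Delta> j * ((if j < p then 1 else 0) - sigmoid (A * (t - cc j))))"
    proof -
      have "(\<Sum>j<m. \<Delta> j * ((if j < p then 1 else 0) - sigmoid (A * (t - cc j))))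
          = (\<Sum>j<m. (if j < p then \<Delta> j else 0)) - (\<Sum>j<m. \<Delta> j * sigmoid (A * (t - cc j)))"
        unfolding sum_subtractf[symmetric] by (intro sum.cong) (auto simp: algebra_simps)
      thus ?thesis using tele by (simp add: algebra_simps)
    qed
    show ?thesis unfolding sumeq decomp using T1 T2 T3 e by linarith
  qed
  show ?thesis
    by (rule exI[of _ "Suc m"], rule exI[of _ a], rule exI[of _ c], rule exI[of _ \<alpha>]) (use P1 P2 in blast)
qed

lemma polar_gen:
  fixes y :: "'a \<Rightarrow> real"
  assumes "finite A"
  shows "\<forall>c p. p \<le> card A \<longrightarrow>
    (\<Sum>S\<in>Pow A. (-1::real)^(card A - card S) * (c + sum y S)^p)
      = (if p = card A then fact (card A) * prod y A else 0)"
  using assms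
proof (induction A rule: finite_induct)
  case empty
  show ?case by simp
next
  case (insert a A)
  define D where "D c p = (\<Sum>S\<in>Pow A. (-1::real)^(card A - card S) * (c + sum y S)^p)" for c p
  have fin: "finite (Pow A)" using insert.hyps by simp
  have step1: "(\<Sum>S\<in>Pow (insert a A). (-1::real)^(card (insert a A) - card S) * (c + sum y S)^p)
      = D (c + y a) p - D c p" for c p
  proof -
    have disj: "Pow A \<inter> insert a ` Pow A = {}" using insert.hyps by auto
    have inj: "inj_on (insert a) (Pow A)" using insert.hyps unfolding inj_on_def
      by (metis PowD insert_ident subsetD)
    have "(\<Sum>S\<in>Pow (insert a A). (-1::real)^(card (insert a A) - card S) * (c + sum y S)^p)
       = (\<Sum>S\<in>Pow A. (-1::real)^(card (insert a A) - card S) * (c + sum y S)^p)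
         + (\<Sum>S\<in>insert a ` Pow A. (-1::real)^(card (insert a A) - card S) * (c + sum y S)^p)"
      unfolding Pow_insert using fin disj by (intro sum.union_disjoint) auto
    also have "(\<Sum>S\<in>Pow A. (-1::real)^(card (insert a A) - card S) * (c + sum y S)^p) = - D c p"
    proof -
      have "(\<Sum>S\<in>Pow A. (-1::real)^(card (insert a A) - card S) * (c + sum y S)^p)
          = (\<Sum>S\<in>Pow A. - ((-1::real)^(card A - card S) * (c + sum y S)^p))"
      proof (rule sum.cong)
        fix S assume "S \<in> Pow A"
        hence "card S \<le> card A" using insert.hyps by (simp add: card_mono)
        hence "card (insert a A) - card S = Suc (card A - card S)" using insert.hyps by simp
        thus "(-1::real)^(card (insert a A) - card S) * (c + sum y S)^p = - ((-1::real)^(card A - card S) * (c + sum y S)^p)"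
          by simp
      qed simp
      thus ?thesis unfolding D_def by (simp add: sum_negf)
    qed
    also have "(\<Sum>S\<in>insert a ` Pow A. (-1::real)^(card (insert a A) - card S) * (c + sum y S)^p)
       = D (c + y a) p"
    proof -
      have "(\<Sum>S\<in>insert a ` Pow A. (-1::real)^(card (insert a A) - card S) * (c + sum y S)^p)
         = (\<Sum>S\<in>Pow A. (-1::real)^(card (insert a A) - card (insert a S)) * (c + sum y (insert a S))^p)"
        using inj by (simp add: sum.reindex)
      also have "\<dots> = D (c + y a) p" unfolding D_def
      proof (rule sum.cong)
        fix S assume S: "S \<in> Pow A"
        hence aS: "a \<notin> S" using insert.hyps by auto
        have fS: "finite S" using S insert.hyps finite_subset by auto
        have "card (insert a S) = Suc (card S)" using aS fS by simp
        moreover have "card (insert a A) = Suc (card A)" using insert.hyps by simp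
        moreover have "sum y (insert a S) = y a + sum y S" using aS fS by simp
        ultimately show "(-1::real)^(card (insert a A) - card (insert a S)) * (c + sum y (insert a S))^p
           = (-1::real)^(card A - card S) * (c + y a + sum y S)^p" by (simp add: add.assoc)
      qed simp
      finally show ?thesis .
    qed
    finally show ?thesis by simp
  qed
  have step2: "D (c + h) p = (\<Sum>j\<le>p. of_nat (p choose j) * h^j * D c (p - j))" for c h p
  proof -
    have "D (c + h) p = (\<Sum>S\<in>Pow A. (-1::real)^(card A - card S) *
             (\<Sum>j\<le>p. of_nat (p choose j) * h^j * (c + sum y S)^(p - j)))"
      unfolding D_def
    proof (rule sum.cong)
      fix S
      have "(c + h + sum y S)^p = (h + (c + sum y S))^p" by (simp add: algebra_simps)
      also have "\<dots> = (\<Sum>j\<le>p. of_nat (p choose j) * h^j * (c + sum y S)^(p - j))"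
        by (rule binomial_ring)
      finally show "(-1::real)^(card A - card S) * (c + h + sum y S)^p =
          (-1::real)^(card A - card S) * (\<Sum>j\<le>p. of_nat (p choose j) * h^j * (c + sum y S)^(p - j))"
        by simp
    qed simp
    also have "\<dots> = (\<Sum>S\<in>Pow A. \<Sum>j\<le>p. of_nat (p choose j) * h^j * ((-1::real)^(card A - card S) * (c + sum y S)^(p - j)))"
      by (simp add: sum_distrib_left algebra_simps)
    also have "\<dots> = (\<Sum>j\<le>p. \<Sum>S\<in>Pow A. of_nat (p choose j) * h^j * ((-1::real)^(card A - card S) * (c + sum y S)^(p - j)))"
      by (rule sum.swap)
    also have "\<dots> = (\<Sum>j\<le>p. of_nat (p choose j) * h^j * D c (p - j))"
      unfolding D_def by (simp add: sum_distrib_left)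
    finally show ?thesis .
  qed
  show ?case
  proof (intro allI impI)
    fix c :: real and p :: nat
    assume p: "p \<le> card (insert a A)"
    have cA: "card (insert a A) = Suc (card A)" using insert.hyps by simp
    show "(\<Sum>S\<in>Pow (insert a A). (-1::real)^(card (insert a A) - card S) * (c + sum y S)^p)
      = (if p = card (insert a A) then fact (card (insert a A)) * prod y (insert a A) else 0)"
    proof (cases p)
      case 0
      have "D (c + y a) 0 = D c 0" unfolding D_def by simp
      thus ?thesis unfolding step1 using 0 cA by simp
    next
      case (Suc q)
      have q: "q \<le> card A" using p Suc cA by simp
      have "D (c + y a) p - D c p = (\<Sum>j\<le>q. of_nat (Suc q choose Suc j) * y a^(Suc j) * D c (q - j))"
        unfolding step2 Suc sum.atMost_Suc_shift by simp
      also have "\<dots> = (\<Sum>j\<le>q. if j = 0 then of_nat (Suc q choose Suc j) * y a^(Suc j) * D c (q - j) else 0)"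
      proof (rule sum.cong)
        fix j assume jq: "j \<in> {..q}"
        show "of_nat (Suc q choose Suc j) * y a^(Suc j) * D c (q - j) =
          (if j = 0 then of_nat (Suc q choose Suc j) * y a^(Suc j) * D c (q - j) else 0)"
        proof (cases "j = 0")
          case False
          have "q - j \<le> card A" using q by simp
          hence "D c (q - j) = (if q - j = card A then fact (card A) * prod y A else 0)"
            using insert.IH unfolding D_def by blast
          moreover have "q - j \<noteq> card A" using False q jq by auto
          ultimately show ?thesis using False by simp
        qed simp
      qed simp
      also have "\<dots> = of_nat (Suc q) * y a * D c q" by (simp add: sum.delta)
      also have "D c q = (if q = card A then fact (card A) * prod y A else 0)"
        using insert.IH q unfolding D_def by blast
      finally have "D (c + y a) p - D c p = of_nat (Suc q) * y a * (if q = card A then fact (card A) * prod y A else 0)" .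
      thus ?thesis unfolding step1 using Suc cA insert.hyps by (simp add: algebra_simps)
    qed
  qed
qed

lemma polar:
  fixes y :: "nat \<Rightarrow> real"
  shows "fact m * (\<Prod>i<m. y i) = (\<Sum>S\<in>Pow {..<m}. (-1::real)^(m - card S) * (sum y S)^m)"
proof -
  have "\<forall>c p. p \<le> card {..<m} \<longrightarrow>
    (\<Sum>S\<in>Pow {..<m}. (-1::real)^(card {..<m} - card S) * (c + sum y S)^p)
      = (if p = card {..<m} then fact (card {..<m}) * prod y {..<m} else 0)"
    by (rule polar_gen) simp
  hence "(\<Sum>S\<in>Pow {..<m}. (-1::real)^(card {..<m} - card S) * (0 + sum y S)^m)
      = (if m = card {..<m} then fact (card {..<m}) * prod y {..<m} else 0)"
    by (metis card_lessThan order_refl)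
  thus ?thesis by simp
qed

lemma sum_lessThan_add_nat: "(\<Sum>j<a+b. h j) = (\<Sum>j<a. h j) + (\<Sum>j<b. h (a + j))"
  for h :: "nat \<Rightarrow> 'b::comm_monoid_add"
  by (induction b) (simp_all add: add.assoc)

lemma prod_lessThan_add_nat: "(\<Prod>j<a+b. h j) = (\<Prod>j<a. h j) * (\<Prod>j<b. h (a + j))"
  for h :: "nat \<Rightarrow> 'b::comm_monoid_mult"
  by (induction b) (simp_all add: mult.assoc)

lemma Qfam_intro:
  fixes ns :: nat and zs :: "nat \<Rightarrow> nat \<Rightarrow> complex" and a c \<alpha> :: "nat \<Rightarrow> real"
  assumes "\<forall>j<ns. zs j \<in> unit_sphere N \<and> 0 < a j \<and> 0 \<le> c j \<and> c j \<le> 1"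
  shows "(\<lambda>x. \<Sum>j<ns. \<alpha> j * sigmoid (a j * ((cmod (hinner N x (zs j)))\<^sup>2 - c j))) \<in> Qfam N"
  unfolding Qfam_def by (rule CollectI, intro exI conjI, rule assms, rule refl)

lemma Qfam_elim:
  assumes "q \<in> Qfam N"
  obtains ns :: nat and zs :: "nat \<Rightarrow> nat \<Rightarrow> complex" and a c \<alpha> :: "nat \<Rightarrow> real" where "\<forall>j<ns. zs j \<in> unit_sphere N \<and> 0 < a j \<and> 0 \<le> c j \<and> c j \<le> 1"
    "q = (\<lambda>x. \<Sum>j<ns. \<alpha> j * sigmoid (a j * ((cmod (hinner N x (zs j)))\<^sup>2 - c j)))"
proof -
  from assms have "\<exists>(ns::nat) (zs::nat \<Rightarrow> nat \<Rightarrow> complex) (a::nat \<Rightarrow> real) (c::nat \<Rightarrow> real) (\<alpha>::nat \<Rightarrow> real).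
      (\<forall>j<ns. zs j \<in> unit_sphere N \<and> 0 < a j \<and> 0 \<le> c j \<and> c j \<le> 1) \<and>
      q = (\<lambda>x. \<Sum>j<ns. \<alpha> j * sigmoid (a j * ((cmod (hinner N x (zs j)))\<^sup>2 - c j)))"
    unfolding Qfam_def by (rule CollectD)
  then show ?thesis by (elim exE conjE) (rule that; assumption)
qed

lemma Qfam_zero: "(\<lambda>x. 0) \<in> Qfam N"
  using Qfam_intro[of 0 "\<lambda>_. \<lambda>_. 0" N "\<lambda>_. 0" "\<lambda>_. 0" "\<lambda>_. 0"] by simp

lemma Qfam_smul: assumes "q \<in> Qfam N" shows "(\<lambda>x. r * q x) \<in> Qfam N"
proof -
  obtain ns :: nat and zs :: "nat \<Rightarrow> nat \<Rightarrow> complex" and a c \<alpha> :: "nat \<Rightarrow> real" where h: "\<forall>j<ns. zs j \<in> unit_sphere N \<and> 0 < a j \<and> 0 \<le> c j \<and> c j \<le> 1"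
    and q: "q = (\<lambda>x. \<Sum>j<ns. \<alpha> j * sigmoid (a j * ((cmod (hinner N x (zs j)))\<^sup>2 - c j)))"
    using assms by (rule Qfam_elim)
  have "(\<lambda>x. r * q x) = (\<lambda>x. \<Sum>j<ns. (r * \<alpha> j) * sigmoid (a j * ((cmod (hinner N x (zs j)))\<^sup>2 - c j)))"
    unfolding q by (simp add: sum_distrib_left mult.assoc)
  thus ?thesis using Qfam_intro[OF h] by simp
qed

lemma Qfam_add: assumes "q1 \<in> Qfam N" "q2 \<in> Qfam N" shows "(\<lambda>x. q1 x + q2 x) \<in> Qfam N"
proof -
  obtain ns1 :: nat and zs1 :: "nat \<Rightarrow> nat \<Rightarrow> complex" and a1 c1 \<alpha>1 :: "nat \<Rightarrow> real" where h1: "\<forall>j<ns1. zs1 j \<in> unit_sphere N \<and> 0 < a1 j \<and> 0 \<le> c1 j \<and> c1 j \<le> 1"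
    and q1: "q1 = (\<lambda>x. \<Sum>j<ns1. \<alpha>1 j * sigmoid (a1 j * ((cmod (hinner N x (zs1 j)))\<^sup>2 - c1 j)))"
    using assms(1) by (rule Qfam_elim)
  obtain ns2 :: nat and zs2 :: "nat \<Rightarrow> nat \<Rightarrow> complex" and a2 c2 \<alpha>2 :: "nat \<Rightarrow> real" where h2: "\<forall>j<ns2. zs2 j \<in> unit_sphere N \<and> 0 < a2 j \<and> 0 \<le> c2 j \<and> c2 j \<le> 1"
    and q2: "q2 = (\<lambda>x. \<Sum>j<ns2. \<alpha>2 j * sigmoid (a2 j * ((cmod (hinner N x (zs2 j)))\<^sup>2 - c2 j)))"
    using assms(2) by (rule Qfam_elim)
  define sel :: "(nat \<Rightarrow> real) \<Rightarrow> (nat \<Rightarrow> real) \<Rightarrow> nat \<Rightarrow> real"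
    where "sel f g j = (if j < ns1 then f j else g (j - ns1))" for f g j
  define zz where "zz j = (if j < ns1 then zs1 j else zs2 (j - ns1))" for j
  have e1: "sel f g j = f j" if "j < ns1" for f g j using that by (simp add: sel_def)
  have e2: "sel f g (ns1 + j) = g j" for f g j by (simp add: sel_def)
  have z1: "zz j = zs1 j" if "j < ns1" for j using that by (simp add: zz_def)
  have z2: "zz (ns1 + j) = zs2 j" for j by (simp add: zz_def)
  have "(\<lambda>x. q1 x + q2 x) = (\<lambda>x. \<Sum>j<ns1+ns2. sel \<alpha>1 \<alpha>2 j * sigmoid (sel a1 a2 j * ((cmod (hinner N x (zz j)))\<^sup>2 - sel c1 c2 j)))"
  proof (rule ext)
    fix x
    have "(\<Sum>j<ns1. sel \<alpha>1 \<alpha>2 j * sigmoid (sel a1 a2 j * ((cmod (hinner N x (zz j)))\<^sup>2 - sel c1 c2 j)))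
        = q1 x" unfolding q1 by (rule sum.cong) (simp_all only: lessThan_iff e1 z1)
    moreover have "(\<Sum>j<ns2. sel \<alpha>1 \<alpha>2 (ns1 + j) * sigmoid (sel a1 a2 (ns1 + j) * ((cmod (hinner N x (zz (ns1 + j))))\<^sup>2 - sel c1 c2 (ns1 + j))))
        = q2 x" unfolding q2 e2 z2 by (rule refl)
    ultimately show "q1 x + q2 x = (\<Sum>j<ns1+ns2. sel \<alpha>1 \<alpha>2 j * sigmoid (sel a1 a2 j * ((cmod (hinner N x (zz j)))\<^sup>2 - sel c1 c2 j)))"
      unfolding sum_lessThan_add_nat by simp
  qed
  moreover have "\<forall>j<ns1+ns2. zz j \<in> unit_sphere N \<and> 0 < sel a1 a2 j \<and> 0 \<le> sel c1 c2 j \<and> sel c1 c2 j \<le> 1"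
  proof (intro allI impI)
    fix j assume j: "j < ns1 + ns2"
    show "zz j \<in> unit_sphere N \<and> 0 < sel a1 a2 j \<and> 0 \<le> sel c1 c2 j \<and> sel c1 c2 j \<le> 1"
    proof (cases "j < ns1")
      case True
      from h1 True have "zs1 j \<in> unit_sphere N \<and> 0 < a1 j \<and> 0 \<le> c1 j \<and> c1 j \<le> 1" by blast
      thus ?thesis using e1[OF True] z1[OF True] by simp
    next
      case False
      then obtain k where k: "j = ns1 + k" "k < ns2" using j by (metis add_diff_inverse_nat nat_add_left_cancel_less)
      from h2 k(2) have "zs2 k \<in> unit_sphere N \<and> 0 < a2 k \<and> 0 \<le> c2 k \<and> c2 k \<le> 1" by blast
      thus ?thesis unfolding k(1) e2 z2 by simp
    qed
  qed
  ultimately show ?thesis using Qfam_intro[of "ns1+ns2" zz N "sel a1 a2" "sel c1 c2" "sel \<alpha>1 \<alpha>2"] by simp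
qed

lemma Qfam_sum: "finite I \<Longrightarrow> (\<And>i. i \<in> I \<Longrightarrow> q i \<in> Qfam N) \<Longrightarrow> (\<lambda>x. \<Sum>i\<in>I. q i x) \<in> Qfam N"
proof (induction I rule: finite_induct)
  case empty thus ?case using Qfam_zero by simp
next
  case (insert a F)
  have "(\<lambda>x. q a x + (\<Sum>i\<in>F. q i x)) \<in> Qfam N"
    by (rule Qfam_add) (use insert in auto)
  thus ?case using insert.hyps by simp
qed

definition Tset :: "nat \<Rightarrow> (nat \<Rightarrow> complex) set \<Rightarrow> ((nat \<Rightarrow> complex) \<Rightarrow> real) set" where
  "Tset N K = {f. \<forall>e>0. \<exists>q\<in>Qfam N. \<forall>x\<in>K. \<bar>f x - q x\<bar> < e}"

lemma T_add: assumes "f \<in> Tset N K" "g \<in> Tset N K" shows "(\<lambda>x. f x + g x) \<in> Tset N K"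
  unfolding Tset_def
proof (intro CollectI allI impI)
  fix e :: real assume e: "e > 0"
  have A: "\<forall>e>0. \<exists>q\<in>Qfam N. \<forall>x\<in>K. \<bar>f x - q x\<bar> < e" using assms(1) unfolding Tset_def by simp
  have B: "\<forall>e>0. \<exists>q\<in>Qfam N. \<forall>x\<in>K. \<bar>g x - q x\<bar> < e" using assms(2) unfolding Tset_def by simp
  have "\<exists>q\<in>Qfam N. \<forall>x\<in>K. \<bar>f x - q x\<bar> < e/2" by (rule A[rule_format, OF half_gt_zero[OF e]])
  then obtain q1 where q1: "q1 \<in> Qfam N" "\<forall>x\<in>K. \<bar>f x - q1 x\<bar> < e/2" by blast
  have "\<exists>q\<in>Qfam N. \<forall>x\<in>K. \<bar>g x - q x\<bar> < e/2" by (rule B[rule_format, OF half_gt_zero[OF e]])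
  then obtain q2 where q2: "q2 \<in> Qfam N" "\<forall>x\<in>K. \<bar>g x - q2 x\<bar> < e/2" by blast
  show "\<exists>q\<in>Qfam N. \<forall>x\<in>K. \<bar>f x + g x - q x\<bar> < e"
  proof (rule bexI[of _ "\<lambda>x. q1 x + q2 x"])
    show "(\<lambda>x. q1 x + q2 x) \<in> Qfam N" by (rule Qfam_add[OF q1(1) q2(1)])
    show "\<forall>x\<in>K. \<bar>f x + g x - (q1 x + q2 x)\<bar> < e"
    proof
      fix x assume "x \<in> K"
      hence "\<bar>f x - q1 x\<bar> < e/2" "\<bar>g x - q2 x\<bar> < e/2" using q1 q2 by auto
      thus "\<bar>f x + g x - (q1 x + q2 x)\<bar> < e" by linarith
    qed
  qed
qed

lemma T_smul: assumes "f \<in> Tset N K" shows "(\<lambda>x. r * f x) \<in> Tset N K"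
  unfolding Tset_def
proof (intro CollectI allI impI)
  fix e :: real assume e: "e > 0"
  have e': "e / (\<bar>r\<bar> + 1) > 0" using e by (simp add: add_nonneg_pos)
  obtain q1 where q1: "q1 \<in> Qfam N" "\<forall>x\<in>K. \<bar>f x - q1 x\<bar> < e / (\<bar>r\<bar> + 1)"
    using assms e' unfolding Tset_def by blast
  show "\<exists>q\<in>Qfam N. \<forall>x\<in>K. \<bar>r * f x - q x\<bar> < e"
  proof (rule bexI[of _ "\<lambda>x. r * q1 x"])
    show "\<forall>x\<in>K. \<bar>r * f x - r * q1 x\<bar> < e"
    proof
      fix x assume "x \<in> K"
      hence h: "\<bar>f x - q1 x\<bar> < e / (\<bar>r\<bar> + 1)" using q1 by blast
      have "\<bar>r * f x - r * q1 x\<bar> = \<bar>r\<bar> * \<bar>f x - q1 x\<bar>" by (metis abs_mult right_diff_distrib)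
      also have "\<dots> \<le> (\<bar>r\<bar> + 1) * \<bar>f x - q1 x\<bar>" by (simp add: mult_right_mono)
      also have "\<dots> < (\<bar>r\<bar> + 1) * (e / (\<bar>r\<bar> + 1))" using h by (intro mult_strict_left_mono) (auto simp: add_nonneg_pos)
      also have "\<dots> = e" by (simp add: add_nonneg_pos)
      finally show "\<bar>r * f x - r * q1 x\<bar> < e" .
    qed
  qed (rule Qfam_smul[OF q1(1)])
qed

lemma T_zero: "(\<lambda>x. 0) \<in> Tset N K"
  unfolding Tset_def by (auto intro!: bexI[OF _ Qfam_zero])

lemma T_sum: "finite I \<Longrightarrow> (\<And>i. i \<in> I \<Longrightarrow> f i \<in> Tset N K) \<Longrightarrow> (\<lambda>x. \<Sum>i\<in>I. f i x) \<in> Tset N K"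
proof (induction I rule: finite_induct)
  case empty thus ?case using T_zero by simp
next
  case (insert a F)
  have "(\<lambda>x. f a x + (\<Sum>i\<in>F. f i x)) \<in> Tset N K"
    by (rule T_add) (use insert in auto)
  thus ?case using insert.hyps by simp
qed

lemma T_cong: "f \<in> Tset N K \<Longrightarrow> (\<And>x. x \<in> K \<Longrightarrow> f x = g x) \<Longrightarrow> g \<in> Tset N K"
  unfolding Tset_def by auto

definition tz :: "nat \<Rightarrow> (nat \<Rightarrow> complex) \<Rightarrow> (nat \<Rightarrow> complex) \<Rightarrow> real" where
  "tz N z x = (cmod (hinner N x z))\<^sup>2"

lemma T_comp:
  assumes z: "z \<in> unit_sphere N" and t01: "\<And>x. x \<in> K \<Longrightarrow> tz N z x \<in> {0..1}"
    and g: "continuous_on {0..1} g"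
  shows "(\<lambda>x. g (tz N z x)) \<in> Tset N K"
  unfolding Tset_def
proof (intro CollectI allI impI)
  fix e :: real assume e: "e > 0"
  obtain ns a c \<alpha> where h: "\<forall>j<(ns::nat). 0 < a j \<and> 0 \<le> c j \<and> c j \<le> 1"
    and ap: "\<forall>t\<in>{0..1}. \<bar>g t - (\<Sum>j<ns. \<alpha> j * sigmoid (a j * (t - c j)))\<bar> < e"
    using approx1d[OF g e] by blast
  define q where "q = (\<lambda>x. \<Sum>j<ns. \<alpha> j * sigmoid (a j * ((cmod (hinner N x ((\<lambda>_. z) j)))\<^sup>2 - c j)))"
  have "\<forall>j<ns. (\<lambda>_. z) j \<in> unit_sphere N \<and> 0 < a j \<and> 0 \<le> c j \<and> c j \<le> 1" using h z by simp
  from Qfam_intro[OF this] have "q \<in> Qfam N" unfolding q_def .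
  moreover have "\<forall>x\<in>K. \<bar>g (tz N z x) - q x\<bar> < e"
  proof
    fix x assume "x \<in> K"
    hence "tz N z x \<in> {0..1}" by (rule t01)
    with ap have "\<bar>g (tz N z x) - (\<Sum>j<ns. \<alpha> j * sigmoid (a j * (tz N z x - c j)))\<bar> < e" by blast
    thus "\<bar>g (tz N z x) - q x\<bar> < e" unfolding q_def tz_def by simp
  qed
  ultimately show "\<exists>q\<in>Qfam N. \<forall>x\<in>K. \<bar>g (tz N z x) - q x\<bar> < e" by blast
qed

definition Kset :: "nat \<Rightarrow> nat \<Rightarrow> real \<Rightarrow> (nat \<Rightarrow> complex) set" where
  "Kset N d \<delta> = {x. (\<forall>i. cmod (x i) \<le> 1) \<and> (\<forall>i. Im (x i) = 0) \<and> (\<forall>i. N \<le> i \<longrightarrow> x i = 0)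
      \<and> \<delta> \<le> Re (x d) \<and> (\<Sum>i<N. (cmod (x i))\<^sup>2) \<le> 1}"

lemma cont_coord [continuous_intros]: "continuous_on S (\<lambda>x::'a \<Rightarrow> 'b::topological_space. x i)"
  by (rule continuous_on_subset[OF continuous_on_product_coordinates]) simp

lemma compact_Kset: "compact (Kset N d \<delta>)"
proof -
  have "compactin (product_topology (\<lambda>_. euclidean) UNIV) (PiE UNIV (\<lambda>_::nat. cball (0::complex) 1))"
    by (simp add: compactin_PiE)
  hence c1: "compact (PiE UNIV (\<lambda>_::nat. cball (0::complex) 1))"
    by (simp add: euclidean_product_topology)
  have cl1: "closed {x::nat \<Rightarrow> complex. \<forall>i. Im (x i) = 0}"
    by (intro closed_Collect_all closed_Collect_eq continuous_intros)
  have cl2: "closed {x::nat \<Rightarrow> complex. \<forall>i. N \<le> i \<longrightarrow> x i = 0}"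
  proof (intro closed_Collect_all)
    fix i show "closed {x::nat \<Rightarrow> complex. N \<le> i \<longrightarrow> x i = 0}"
      by (cases "N \<le> i") (simp_all add: closed_Collect_eq continuous_intros)
  qed
  have cl3: "closed {x::nat \<Rightarrow> complex. \<delta> \<le> Re (x d)}"
    by (intro closed_Collect_le continuous_intros)
  have cl4: "closed {x::nat \<Rightarrow> complex. (\<Sum>i<N. (cmod (x i))\<^sup>2) \<le> 1}"
    by (intro closed_Collect_le continuous_intros)
  have eq: "Kset N d \<delta> = PiE UNIV (\<lambda>_::nat. cball (0::complex) 1) \<inter>
     ({x. \<forall>i. Im (x i) = 0} \<inter> {x. \<forall>i. N \<le> i \<longrightarrow> x i = 0} \<inter> {x. \<delta> \<le> Re (x d)}
       \<inter> {x. (\<Sum>i<N. (cmod (x i))\<^sup>2) \<le> 1})"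
    unfolding Kset_def by (auto simp: PiE_UNIV_domain Pi_iff)
  show ?thesis unfolding eq using c1 cl1 cl2 cl3 cl4 by (intro compact_Int_closed closed_Int) auto
qed

lemma hinner_le1:
  assumes x: "x \<in> Kset N d \<delta>" and z: "z \<in> unit_sphere N"
  shows "cmod (hinner N x z) \<le> 1"
proof -
  have "cmod (hinner N x z) \<le> (\<Sum>i<N. cmod (cnj (x i) * z i))"
    unfolding hinner_def by (rule norm_sum)
  also have "\<dots> \<le> (\<Sum>i<N. ((cmod (x i))\<^sup>2 + (cmod (z i))\<^sup>2) / 2)"
  proof (rule sum_mono)
    fix i
    have "0 \<le> (cmod (x i) - cmod (z i))\<^sup>2" by simp
    thus "cmod (cnj (x i) * z i) \<le> ((cmod (x i))\<^sup>2 + (cmod (z i))\<^sup>2) / 2"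
      by (simp add: norm_mult power2_diff)
  qed
  also have "\<dots> = ((\<Sum>i<N. (cmod (x i))\<^sup>2) + (\<Sum>i<N. (cmod (z i))\<^sup>2)) / 2"
    by (simp only: sum_divide_distrib[symmetric] sum.distrib)
  also have "\<dots> \<le> 1" using x z unfolding Kset_def unit_sphere_def by simp
  finally show ?thesis .
qed

lemma tz_K: "x \<in> Kset N d \<delta> \<Longrightarrow> z \<in> unit_sphere N \<Longrightarrow> tz N z x \<in> {0..1}"
  using hinner_le1[of x N d \<delta> z] unfolding tz_def by (simp add: power_le_one)

lemma T_const:
  assumes "0 < N" shows "(\<lambda>x. c) \<in> Tset N (Kset N d \<delta>)"
proof -
  define z0 where "z0 = (\<lambda>j::nat. if j = 0 then (1::complex) else 0)"
  have "(\<Sum>i<N. (cmod (z0 i))\<^sup>2) = (\<Sum>i<N. if i = 0 then 1 else 0)"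
    by (intro sum.cong) (auto simp: z0_def)
  also have "\<dots> = 1" using assms by simp
  finally have zs: "z0 \<in> unit_sphere N" unfolding unit_sphere_def z0_def using assms by auto
  have t: "\<And>x. x \<in> Kset N d \<delta> \<Longrightarrow> tz N z0 x \<in> {0..1}" using tz_K zs by blast
  define g0 where "g0 = (\<lambda>_::real. c)"
  have gc: "continuous_on {0..1} g0" unfolding g0_def by (rule continuous_on_const)
  have "(\<lambda>x. g0 (tz N z0 x)) \<in> Tset N (Kset N d \<delta>)" using T_comp[OF zs t gc] .
  thus ?thesis by (simp add: g0_def)
qed

lemma lin_pow_T:
  assumes N: "0 < N"
  shows "(\<lambda>x. (\<Sum>j<N. Re (x j) * v j)^(2*k)) \<in> Tset N (Kset N d \<delta>)"
proof -
  define s where "s = sqrt (\<Sum>j<N. (v j)\<^sup>2)"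
  have ss: "s\<^sup>2 = (\<Sum>j<N. (v j)\<^sup>2)" unfolding s_def by (simp add: sum_nonneg)
  show ?thesis
  proof (cases "s = 0")
    case True
    hence "(\<Sum>j<N. (v j)\<^sup>2) = 0" using ss by simp
    hence "\<forall>j\<in>{..<N}. (v j)\<^sup>2 = 0" by (subst sum_nonneg_eq_0_iff[symmetric]) auto
    hence "(\<lambda>x. (\<Sum>j<N. Re (x j) * v j)^(2*k)) = (\<lambda>x. 0^(2*k))" by simp
    thus ?thesis using T_const[OF N] by simp
  next
    case False
    have "s \<ge> 0" unfolding s_def by (intro real_sqrt_ge_zero sum_nonneg) simp
    hence spos: "s > 0" using False by linarith
    define z where "z j = (if j < N then complex_of_real (v j / s) else 0)" for j
    have "(\<Sum>j<N. (cmod (z j))\<^sup>2) = (\<Sum>j<N. (v j)\<^sup>2 / s\<^sup>2)"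
      unfolding z_def by (intro sum.cong) (auto simp: power_divide norm_divide)
    also have "\<dots> = (\<Sum>j<N. (v j)\<^sup>2) / s\<^sup>2" by (simp add: sum_divide_distrib)
    also have "\<dots> = 1" unfolding ss[symmetric] using spos by simp
    finally have zs: "z \<in> unit_sphere N" unfolding unit_sphere_def z_def by auto
    define g where "g t = s^(2*k) * t^k" for t :: real
    have gc: "continuous_on {0..1} g" unfolding g_def by (intro continuous_intros)
    have t: "\<And>x. x \<in> Kset N d \<delta> \<Longrightarrow> tz N z x \<in> {0..1}" using tz_K zs by blast
    have "(\<lambda>x. g (tz N z x)) \<in> Tset N (Kset N d \<delta>)" by (rule T_comp[OF zs t gc])
    moreover have "g (tz N z x) = (\<Sum>j<N. Re (x j) * v j)^(2*k)" if x: "x \<in> Kset N d \<delta>" for x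
    proof -
      have xr: "x j = complex_of_real (Re (x j))" for j
        using x unfolding Kset_def by (simp add: complex_eq_iff)
      have "hinner N x z = (\<Sum>j<N. complex_of_real (Re (x j) * (v j / s)))"
        unfolding hinner_def z_def by (intro sum.cong refl) (subst xr, simp)
      also have "\<dots> = complex_of_real ((\<Sum>j<N. Re (x j) * v j) / s)"
        by (simp add: sum_divide_distrib)
      finally have "tz N z x = ((\<Sum>j<N. Re (x j) * v j) / s)\<^sup>2"
        unfolding tz_def by (simp only: norm_of_real power2_abs)
      hence "g (tz N z x) = s^(2*k) * (((\<Sum>j<N. Re (x j) * v j) / s)^2)^k" unfolding g_def by simp
      also have "\<dots> = (s\<^sup>2 * ((\<Sum>j<N. Re (x j) * v j) / s)\<^sup>2)^k"
        by (simp add: power_mult power_mult_distrib)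
      also have "s\<^sup>2 * ((\<Sum>j<N. Re (x j) * v j) / s)\<^sup>2 = (\<Sum>j<N. Re (x j) * v j)\<^sup>2"
        using spos by (simp add: power_divide)
      also have "((\<Sum>j<N. Re (x j) * v j)\<^sup>2)^k = (\<Sum>j<N. Re (x j) * v j)^(2*k)"
        by (simp add: power_mult)
      finally show ?thesis .
    qed
    ultimately show ?thesis by (rule T_cong)
  qed
qed

lemma mono_T:
  fixes k :: nat and \<iota> :: "nat \<Rightarrow> nat"
  assumes N: "0 < N" and \<iota>: "\<forall>i<2*k. \<iota> i < N"
  shows "(\<lambda>x. \<Prod>i<2*k. Re (x (\<iota> i))) \<in> Tset N (Kset N d \<delta>)"
proof -
  define m where "m = 2 * k"
  define vS where "vS S j = (\<Sum>i\<in>S. if \<iota> i = j then 1 else (0::real))" for S j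
  have lin: "(\<Sum>i\<in>S. Re (x (\<iota> i))) = (\<Sum>j<N. Re (x j) * vS S j)" if S: "S \<in> Pow {..<m}" for S x
  proof -
    have "(\<Sum>j<N. Re (x j) * vS S j) = (\<Sum>j<N. \<Sum>i\<in>S. if \<iota> i = j then Re (x j) else 0)"
      unfolding vS_def by (simp add: sum_distrib_left if_distrib cong: if_cong)
    also have "\<dots> = (\<Sum>i\<in>S. \<Sum>j<N. if \<iota> i = j then Re (x j) else 0)" by (rule sum.swap)
    also have "\<dots> = (\<Sum>i\<in>S. Re (x (\<iota> i)))"
    proof (rule sum.cong)
      fix i assume "i \<in> S"
      hence "\<iota> i < N" using S \<iota> unfolding m_def by auto
      thus "(\<Sum>j<N. if \<iota> i = j then Re (x j) else 0) = Re (x (\<iota> i))" by (simp add: sum.delta)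
    qed simp
    finally show ?thesis by simp
  qed
  have eq: "(\<Prod>i<m. Re (x (\<iota> i))) =
      (\<Sum>S\<in>Pow {..<m}. ((-1::real)^(m - card S) / fact m) * (\<Sum>j<N. Re (x j) * vS S j)^m)" for x
  proof -
    have "fact m * (\<Prod>i<m. Re (x (\<iota> i))) = (\<Sum>S\<in>Pow {..<m}. (-1::real)^(m - card S) * (\<Sum>i\<in>S. Re (x (\<iota> i)))^m)"
      by (rule polar)
    also have "\<dots> = (\<Sum>S\<in>Pow {..<m}. (-1::real)^(m - card S) * (\<Sum>j<N. Re (x j) * vS S j)^m)"
      by (intro sum.cong refl) (simp add: lin)
    finally show ?thesis by (simp add: sum_divide_distrib[symmetric] field_simps)
  qed
  have "(\<lambda>x. \<Sum>S\<in>Pow {..<m}. ((-1::real)^(m - card S) / fact m) * (\<Sum>j<N. Re (x j) * vS S j)^m) \<in> Tset N (Kset N d \<delta>)"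
    by (intro T_sum T_smul) (auto simp: m_def intro: lin_pow_T[OF N])
  thus ?thesis using eq unfolding m_def by simp
qed

inductive_set EPR :: "nat \<Rightarrow> ((nat \<Rightarrow> complex) \<Rightarrow> real) set" for N :: nat where
  mono: "(\<forall>i<2*(k::nat). (\<iota>::nat\<Rightarrow>nat) i < N) \<Longrightarrow> (\<lambda>x. \<Prod>i<2*k. Re (x (\<iota> i))) \<in> EPR N"
| add: "f \<in> EPR N \<Longrightarrow> g \<in> EPR N \<Longrightarrow> (\<lambda>x. f x + g x) \<in> EPR N"
| smul: "f \<in> EPR N \<Longrightarrow> (\<lambda>x. r * f x) \<in> EPR N"

lemma EPR_T: "f \<in> EPR N \<Longrightarrow> 0 < N \<Longrightarrow> f \<in> Tset N (Kset N d \<delta>)"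
proof (induction rule: EPR.induct)
  case (mono k \<iota>) thus ?case using mono_T by blast
next
  case (add f g) thus ?case by (intro T_add) auto
next
  case (smul f r) thus ?case by (intro T_smul) auto
qed

lemma EPR_cont: "f \<in> EPR N \<Longrightarrow> continuous_on S f"
  by (induction rule: EPR.induct) (auto intro!: continuous_intros)

lemma EPR_mono_mult:
  fixes k l :: nat and \<iota> \<kappa> :: "nat \<Rightarrow> nat"
  assumes "\<forall>i<2*k. \<iota> i < N" "\<forall>i<2*l. \<kappa> i < N"
  shows "(\<lambda>x. (\<Prod>i<2*k. Re (x (\<iota> i))) * (\<Prod>i<2*l. Re (x (\<kappa> i)))) \<in> EPR N"
proof -
  define \<rho> where "\<rho> i = (if i < 2*k then \<iota> i else \<kappa> (i - 2*k))" for i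
  have r: "\<forall>i<2*(k+l). \<rho> i < N" using assms unfolding \<rho>_def by auto
  have "(\<Prod>i<2*(k+l). Re (x (\<rho> i))) = (\<Prod>i<2*k. Re (x (\<iota> i))) * (\<Prod>i<2*l. Re (x (\<kappa> i)))" for x
  proof -
    have "(\<Prod>i<2*(k+l). Re (x (\<rho> i))) = (\<Prod>i<2*k+2*l. Re (x (\<rho> i)))" by (simp add: algebra_simps)
    also have "\<dots> = (\<Prod>i<2*k. Re (x (\<rho> i))) * (\<Prod>i<2*l. Re (x (\<rho> (2*k + i))))"
      by (rule prod_lessThan_add_nat)
    also have "(\<Prod>i<2*k. Re (x (\<rho> i))) = (\<Prod>i<2*k. Re (x (\<iota> i)))"
      by (intro prod.cong refl) (simp add: \<rho>_def)
    also have "(\<Prod>i<2*l. Re (x (\<rho> (2*k + i)))) = (\<Prod>i<2*l. Re (x (\<kappa> i)))"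
      by (simp add: \<rho>_def)
    finally show ?thesis .
  qed
  hence eqf: "(\<lambda>x. \<Prod>i<2*(k+l). Re (x (\<rho> i))) = (\<lambda>x. (\<Prod>i<2*k. Re (x (\<iota> i))) * (\<Prod>i<2*l. Re (x (\<kappa> i))))"
    by (rule ext)
  show ?thesis unfolding eqf[symmetric] by (rule EPR.mono[OF r])
qed

lemma EPR_mult: "f \<in> EPR N \<Longrightarrow> g \<in> EPR N \<Longrightarrow> (\<lambda>x. f x * g x) \<in> EPR N"
proof (induction f rule: EPR.induct)
  case (mono k \<iota>)
  note outer = mono.hyps
  from mono(2) show ?case
  proof (induction g rule: EPR.induct)
    case (mono l \<kappa>) thus ?case using EPR_mono_mult[OF outer mono.hyps] by simp
  next
    case (add g1 g2)
    from EPR.add[OF add.IH] show ?case by (simp add: algebra_simps)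
  next
    case (smul g r)
    from EPR.smul[OF smul.IH, of r] show ?case by (simp add: algebra_simps)
  qed
next
  case (add f1 f2)
  from EPR.add[OF add.IH(1)[OF add.prems] add.IH(2)[OF add.prems]] show ?case by (simp add: algebra_simps)
next
  case (smul f r)
  from EPR.smul[OF smul.IH[OF smul.prems], of r] show ?case by (simp add: algebra_simps)
qed

lemma EPR_const: "(\<lambda>x. c) \<in> EPR N"
proof -
  have "(\<lambda>x. \<Prod>i<2*(0::nat). Re (x ((\<lambda>_. 0::nat) i))) \<in> EPR N" by (rule EPR.mono) simp
  from EPR.smul[OF this, of c] show ?thesis by simp
qed

lemma prod2: "(\<Prod>i<2*(1::nat). h i) = h 0 * (h 1 :: real)"
  by (simp add: numeral_2_eq_2)

lemma prod2': "(\<Prod>i<(2::nat). h i) = h 0 * (h 1 :: real)"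
  by (simp add: numeral_2_eq_2)

lemma EPR_sep:
  assumes dN: "d < N" and \<delta>: "0 < \<delta>" and x: "x \<in> Kset N d \<delta>" and y: "y \<in> Kset N d \<delta>" and ne: "x \<noteq> y"
  shows "\<exists>f\<in>EPR N. f x \<noteq> f y"
proof -
  obtain i where i: "x i \<noteq> y i" using ne by auto
  have iN: "i < N"
  proof (rule ccontr)
    assume "\<not> i < N" thus False using x y i unfolding Kset_def by auto
  qed
  have Rei: "Re (x i) \<noteq> Re (y i)" using x y i unfolding Kset_def by (auto simp: complex_eq_iff)
  have xd: "Re (x d) \<ge> \<delta>" and yd: "Re (y d) \<ge> \<delta>" using x y unfolding Kset_def by auto
  show ?thesis
  proof (cases "Re (x d) = Re (y d)")
    case False
    define \<iota> where "\<iota> = (\<lambda>_::nat. d)"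
    have "(\<lambda>x. \<Prod>i<2*(1::nat). Re (x (\<iota> i))) \<in> EPR N" by (rule EPR.mono) (simp add: \<iota>_def dN)
    hence m: "(\<lambda>x. Re (x d) * Re (x d)) \<in> EPR N" by (simp only: prod2 \<iota>_def)
    have "Re (x d) * Re (x d) \<noteq> Re (y d) * Re (y d)"
    proof
      assume "Re (x d) * Re (x d) = Re (y d) * Re (y d)"
      hence "(Re (x d))\<^sup>2 = (Re (y d))\<^sup>2" by (simp add: power2_eq_square)
      hence "Re (x d) = Re (y d)" using xd yd \<delta> by (simp add: power2_eq_iff_nonneg)
      thus False using False by simp
    qed
    thus ?thesis by (intro bexI[OF _ m]) simp
  next
    case True
    define \<iota> where "\<iota> = (\<lambda>j::nat. if j = 0 then i else d)"
    have "(\<lambda>x. \<Prod>i<2*(1::nat). Re (x (\<iota> i))) \<in> EPR N" by (rule EPR.mono) (simp add: \<iota>_def dN iN)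
    hence m: "(\<lambda>x. Re (x i) * Re (x d)) \<in> EPR N" by (simp add: prod2' \<iota>_def)
    have "Re (x i) * Re (x d) \<noteq> Re (y i) * Re (y d)" using True Rei xd \<delta> by simp
    thus ?thesis by (intro bexI[OF _ m]) simp
  qed
qed

lemma cont_T:
  assumes dN: "d < N" and \<delta>: "0 < \<delta>" and \<phi>: "continuous_on (Kset N d \<delta>) \<phi>"
  shows "\<phi> \<in> Tset N (Kset N d \<delta>)"
  unfolding Tset_def
proof (intro CollectI allI impI)
  fix e :: real assume e: "e > 0"
  have "\<exists>g. g \<in> EPR N \<and> (\<forall>x\<in>Kset N d \<delta>. \<bar>\<phi> x - g x\<bar> < e/2)"
  proof (rule Stone_Weierstrass_HOL[of "Kset N d \<delta>" "\<lambda>f. f \<in> EPR N"])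
    show "compact (Kset N d \<delta>)" by (rule compact_Kset)
    show "\<And>c. (\<lambda>x. c) \<in> EPR N" by (rule EPR_const)
    show "\<And>f. f \<in> EPR N \<Longrightarrow> continuous_on (Kset N d \<delta>) f" by (rule EPR_cont)
    show "\<And>f g. f \<in> EPR N \<and> g \<in> EPR N \<Longrightarrow> (\<lambda>x. f x + g x) \<in> EPR N"
      by (rule EPR.add) auto
    show "\<And>f g. f \<in> EPR N \<and> g \<in> EPR N \<Longrightarrow> (\<lambda>x. f x * g x) \<in> EPR N"
      by (rule EPR_mult) auto
    show "\<And>x y. x \<in> Kset N d \<delta> \<and> y \<in> Kset N d \<delta> \<and> x \<noteq> y \<Longrightarrow> \<exists>f. f \<in> EPR N \<and> f x \<noteq> f y"
      using EPR_sep[OF dN \<delta>] by blast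
    show "continuous_on (Kset N d \<delta>) \<phi>" by (rule \<phi>)
    show "0 < e/2" using e by simp
  qed
  then obtain g where g: "g \<in> EPR N" "\<forall>x\<in>Kset N d \<delta>. \<bar>\<phi> x - g x\<bar> < e/2" by blast
  have "g \<in> Tset N (Kset N d \<delta>)" using EPR_T[OF g(1)] dN by simp
  hence "\<forall>e>0. \<exists>q\<in>Qfam N. \<forall>x\<in>Kset N d \<delta>. \<bar>g x - q x\<bar> < e" unfolding Tset_def by simp
  hence "\<exists>q\<in>Qfam N. \<forall>x\<in>Kset N d \<delta>. \<bar>g x - q x\<bar> < e/2" using half_gt_zero[OF e] by blast
  then obtain q where q: "q \<in> Qfam N" "\<forall>x\<in>Kset N d \<delta>. \<bar>g x - q x\<bar> < e/2" by blast
  show "\<exists>q\<in>Qfam N. \<forall>x\<in>Kset N d \<delta>. \<bar>\<phi> x - q x\<bar> < e"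
  proof (intro bexI[OF _ q(1)] ballI)
    fix x assume "x \<in> Kset N d \<delta>"
    hence "\<bar>\<phi> x - g x\<bar> < e/2" "\<bar>g x - q x\<bar> < e/2" using g q by auto
    thus "\<bar>\<phi> x - q x\<bar> < e" by linarith
  qed
qed

lemma sigmoid_cont [continuous_intros]:
  assumes "continuous_on S f" shows "continuous_on S (\<lambda>x. sigmoid (f x))"
  unfolding sigmoid_def
proof (intro continuous_intros ballI assms)
  fix x show "1 + exp (- f x) \<noteq> 0" using exp_pos1[of "- f x"] by linarith
qed

lemma Qfam_cont: assumes "q \<in> Qfam N" shows "continuous_on UNIV q"
proof -
  obtain ns :: nat and zs :: "nat \<Rightarrow> nat \<Rightarrow> complex" and a c \<alpha> :: "nat \<Rightarrow> real"
    where q: "q = (\<lambda>x. \<Sum>j<ns. \<alpha> j * sigmoid (a j * ((cmod (hinner N x (zs j)))\<^sup>2 - c j)))"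
    using assms by (rule Qfam_elim)
  show ?thesis unfolding q hinner_def by (intro continuous_intros)
qed

lemma Qfam_bound: assumes "q \<in> Qfam N" shows "\<exists>B. \<forall>x. \<bar>q x\<bar> \<le> B"
proof -
  obtain ns :: nat and zs :: "nat \<Rightarrow> nat \<Rightarrow> complex" and a c \<alpha> :: "nat \<Rightarrow> real"
    where q: "q = (\<lambda>x. \<Sum>j<ns. \<alpha> j * sigmoid (a j * ((cmod (hinner N x (zs j)))\<^sup>2 - c j)))"
    using assms by (rule Qfam_elim)
  have "\<bar>q x\<bar> \<le> (\<Sum>j<ns. \<bar>\<alpha> j\<bar>)" for x
  proof -
    have "\<bar>q x\<bar> \<le> (\<Sum>j<ns. \<bar>\<alpha> j * sigmoid (a j * ((cmod (hinner N x (zs j)))\<^sup>2 - c j))\<bar>)"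
      unfolding q by (rule sum_abs)
    also have "\<dots> \<le> (\<Sum>j<ns. \<bar>\<alpha> j\<bar>)"
    proof (rule sum_mono)
      fix j
      let ?s = "sigmoid (a j * ((cmod (hinner N x (zs j)))\<^sup>2 - c j))"
      have "\<bar>?s\<bar> \<le> 1" using sigmoid_pos[of "a j * ((cmod (hinner N x (zs j)))\<^sup>2 - c j)"]
          sigmoid_lt1[of "a j * ((cmod (hinner N x (zs j)))\<^sup>2 - c j)"] by simp
      hence "\<bar>\<alpha> j\<bar> * \<bar>?s\<bar> \<le> \<bar>\<alpha> j\<bar> * 1" by (intro mult_left_mono) auto
      thus "\<bar>\<alpha> j * ?s\<bar> \<le> \<bar>\<alpha> j\<bar>" by (simp add: abs_mult)
    qed
    finally show ?thesis .
  qed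
  thus ?thesis by blast
qed

locale apx = finite_measure M for M :: "(nat \<Rightarrow> complex) measure" +
  fixes N d :: nat and \<delta> :: real and Gb :: "(nat \<Rightarrow> complex) set"
  assumes sM: "sets M = sets (restrict_space borel Gb)"
    and GK: "Gb \<subseteq> Kset N d \<delta>" and dN: "d < N" and \<delta>pos: "0 < \<delta>"
begin

lemma space_M: "space M = Gb"
  using sets_eq_imp_space_eq[OF sM] by (simp add: space_restrict_space)

lemma meas_borel: "h \<in> borel_measurable borel \<Longrightarrow> h \<in> borel_measurable M"
  using measurable_restrict_space1[of h borel borel Gb] measurable_cong_sets[OF sM refl] by blast

lemma meas_cont: "continuous_on UNIV h \<Longrightarrow> h \<in> borel_measurable M"
  by (intro meas_borel borel_measurable_continuous_onI)

lemma sqint_bounded: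
  fixes h :: "_ \<Rightarrow> real"
  assumes "h \<in> borel_measurable M" "\<And>x. x \<in> space M \<Longrightarrow> \<bar>h x\<bar> \<le> B"
  shows "integrable M (\<lambda>x. (h x)\<^sup>2)"
proof (rule integrable_const_bound[where B="B\<^sup>2"])
  show "AE x in M. norm ((h x)\<^sup>2) \<le> B\<^sup>2"
  proof (rule AE_I2)
    fix x assume "x \<in> space M"
    hence "\<bar>h x\<bar> \<le> B" by (rule assms(2))
    hence "\<bar>h x\<bar>\<^sup>2 \<le> B\<^sup>2" by (intro power_mono) auto
    thus "norm ((h x)\<^sup>2) \<le> B\<^sup>2" by simp
  qed
qed (use assms(1) in simp)

lemma q_meas: "q \<in> Qfam N \<Longrightarrow> q \<in> borel_measurable M"
  by (rule meas_cont[OF Qfam_cont])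

lemma q_sqint: assumes "q \<in> Qfam N" shows "integrable M (\<lambda>x. (q x)\<^sup>2)"
proof -
  obtain B where "\<forall>x. \<bar>q x\<bar> \<le> B" using Qfam_bound[OF assms] by blast
  thus ?thesis using sqint_bounded[OF q_meas[OF assms]] by blast
qed

lemma add_sqint:
  fixes u v :: "_ \<Rightarrow> real"
  assumes u: "u \<in> borel_measurable M" "integrable M (\<lambda>x. (u x)\<^sup>2)"
    and v: "v \<in> borel_measurable M" "integrable M (\<lambda>x. (v x)\<^sup>2)"
  shows "integrable M (\<lambda>x. (u x + v x)\<^sup>2)"
proof (rule Bochner_Integration.integrable_bound[where f="\<lambda>x. 2 * (u x)\<^sup>2 + 2 * (v x)\<^sup>2"])
  show "integrable M (\<lambda>x. 2 * (u x)\<^sup>2 + 2 * (v x)\<^sup>2)"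
  proof -
    have i1: "integrable M (\<lambda>x. 2 * (u x)\<^sup>2)" using u(2) by simp
    have i2: "integrable M (\<lambda>x. 2 * (v x)\<^sup>2)" using v(2) by simp
    show ?thesis by (rule Bochner_Integration.integrable_add[OF i1 i2])
  qed
  show "(\<lambda>x. (u x + v x)\<^sup>2) \<in> borel_measurable M" using u v by measurable
  show "AE x in M. norm ((u x + v x)\<^sup>2) \<le> norm (2 * (u x)\<^sup>2 + 2 * (v x)\<^sup>2)"
  proof (rule AE_I2)
    fix x
    have "0 \<le> (u x - v x)\<^sup>2" by simp
    hence h: "(u x + v x)\<^sup>2 \<le> 2 * (u x)\<^sup>2 + 2 * (v x)\<^sup>2" by (simp add: power2_sum power2_diff)
    have nn: "0 \<le> 2 * (u x)\<^sup>2 + 2 * (v x)\<^sup>2" by simp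
    show "norm ((u x + v x)\<^sup>2) \<le> norm (2 * (u x)\<^sup>2 + 2 * (v x)\<^sup>2)"
      using h by (simp only: real_norm_def abs_power2 abs_of_nonneg[OF nn])
  qed
qed

lemma sqint_uminus:
  fixes u :: "_ \<Rightarrow> real"
  shows "integrable M (\<lambda>x. (u x)\<^sup>2) \<Longrightarrow> integrable M (\<lambda>x. (- u x)\<^sup>2)"
  by simp

lemma diff_sqint:
  fixes u v :: "_ \<Rightarrow> real"
  assumes u: "u \<in> borel_measurable M" "integrable M (\<lambda>x. (u x)\<^sup>2)"
    and v: "v \<in> borel_measurable M" "integrable M (\<lambda>x. (v x)\<^sup>2)"
  shows "integrable M (\<lambda>x. (u x - v x)\<^sup>2)"
proof -
  have "integrable M (\<lambda>x. (u x + (- v x))\<^sup>2)"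
    using v by (intro add_sqint u) auto
  thus ?thesis by simp
qed

lemma sum2_ineq:
  fixes u v :: "_ \<Rightarrow> real"
  assumes u: "u \<in> borel_measurable M" "integrable M (\<lambda>x. (u x)\<^sup>2)"
    and v: "v \<in> borel_measurable M" "integrable M (\<lambda>x. (v x)\<^sup>2)"
  shows "(\<integral>x. (u x + v x)\<^sup>2 \<partial>M) \<le> 2 * (\<integral>x. (u x)\<^sup>2 \<partial>M) + 2 * (\<integral>x. (v x)\<^sup>2 \<partial>M)"
proof -
  have "(\<integral>x. (u x + v x)\<^sup>2 \<partial>M) \<le> (\<integral>x. 2 * (u x)\<^sup>2 + 2 * (v x)\<^sup>2 \<partial>M)"
  proof (rule integral_mono)
    show "integrable M (\<lambda>x. (u x + v x)\<^sup>2)" by (rule add_sqint[OF u v])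
    show "integrable M (\<lambda>x. 2 * (u x)\<^sup>2 + 2 * (v x)\<^sup>2)"
    proof -
    have i1: "integrable M (\<lambda>x. 2 * (u x)\<^sup>2)" using u(2) by simp
    have i2: "integrable M (\<lambda>x. 2 * (v x)\<^sup>2)" using v(2) by simp
    show ?thesis by (rule Bochner_Integration.integrable_add[OF i1 i2])
  qed
    fix x
    have "0 \<le> (u x - v x)\<^sup>2" by simp
    thus "(u x + v x)\<^sup>2 \<le> 2 * (u x)\<^sup>2 + 2 * (v x)\<^sup>2" by (simp add: power2_sum power2_diff)
  qed
  also have "\<dots> = 2 * (\<integral>x. (u x)\<^sup>2 \<partial>M) + 2 * (\<integral>x. (v x)\<^sup>2 \<partial>M)"
    using u v by (simp add: integral_add integral_mult_right)
  finally show ?thesis .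
qed

definition AP :: "((nat \<Rightarrow> complex) \<Rightarrow> real) \<Rightarrow> bool" where
  "AP f \<longleftrightarrow> f \<in> borel_measurable M \<and> integrable M (\<lambda>x. (f x)\<^sup>2) \<and>
     (\<forall>e>0. \<exists>q\<in>Qfam N. (\<integral>x. (q x - f x)\<^sup>2 \<partial>M) < e)"

lemma AP_limit:
  assumes f: "f \<in> borel_measurable M" "integrable M (\<lambda>x. (f x)\<^sup>2)"
    and h: "\<And>e. e > 0 \<Longrightarrow> \<exists>h. AP h \<and> (\<integral>x. (h x - f x)\<^sup>2 \<partial>M) < e"
  shows "AP f"
  unfolding AP_def
proof (intro conjI allI impI f)
  fix e :: real assume e: "e > 0"
  obtain g where g: "AP g" "(\<integral>x. (g x - f x)\<^sup>2 \<partial>M) < e/4" using h[of "e/4"] e by auto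
  have gm: "g \<in> borel_measurable M" "integrable M (\<lambda>x. (g x)\<^sup>2)" using g(1) unfolding AP_def by auto
  have A: "\<forall>e>0. \<exists>q\<in>Qfam N. (\<integral>x. (q x - g x)\<^sup>2 \<partial>M) < e" using g(1) unfolding AP_def by auto
  have "\<exists>q\<in>Qfam N. (\<integral>x. (q x - g x)\<^sup>2 \<partial>M) < e/4" by (rule A[rule_format]) (use e in simp)
  then obtain q where q: "q \<in> Qfam N" "(\<integral>x. (q x - g x)\<^sup>2 \<partial>M) < e/4" by blast
  have qm: "q \<in> borel_measurable M" "integrable M (\<lambda>x. (q x)\<^sup>2)" using q_meas[OF q(1)] q_sqint[OF q(1)] by auto
  have "(\<integral>x. (q x - f x)\<^sup>2 \<partial>M) = (\<integral>x. ((q x - g x) + (g x - f x))\<^sup>2 \<partial>M)" by simp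
  also have "\<dots> \<le> 2 * (\<integral>x. (q x - g x)\<^sup>2 \<partial>M) + 2 * (\<integral>x. (g x - f x)\<^sup>2 \<partial>M)"
    by (rule sum2_ineq) (use qm gm f in \<open>auto intro: diff_sqint\<close>)
  also have "\<dots> < e" using q(2) g(2) by linarith
  finally show "\<exists>q\<in>Qfam N. (\<integral>x. (q x - f x)\<^sup>2 \<partial>M) < e" using q(1) by blast
qed

lemma AP_add:
  assumes f: "AP f" and g: "AP g"
  shows "AP (\<lambda>x. f x + g x)"
proof -
  have fm: "f \<in> borel_measurable M" "integrable M (\<lambda>x. (f x)\<^sup>2)" using f unfolding AP_def by auto
  have gm: "g \<in> borel_measurable M" "integrable M (\<lambda>x. (g x)\<^sup>2)" using g unfolding AP_def by auto
  show ?thesis unfolding AP_def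
  proof (intro conjI allI impI)
    show "(\<lambda>x. f x + g x) \<in> borel_measurable M" using fm gm by measurable
    show "integrable M (\<lambda>x. (f x + g x)\<^sup>2)" by (rule add_sqint[OF fm gm])
    fix e :: real assume e: "e > 0"
    have A: "\<forall>e>0. \<exists>q\<in>Qfam N. (\<integral>x. (q x - f x)\<^sup>2 \<partial>M) < e" using f unfolding AP_def by auto
    have "\<exists>q\<in>Qfam N. (\<integral>x. (q x - f x)\<^sup>2 \<partial>M) < e/4" by (rule A[rule_format]) (use e in simp)
    then obtain q1 where q1: "q1 \<in> Qfam N" "(\<integral>x. (q1 x - f x)\<^sup>2 \<partial>M) < e/4" by blast
    have B: "\<forall>e>0. \<exists>q\<in>Qfam N. (\<integral>x. (q x - g x)\<^sup>2 \<partial>M) < e" using g unfolding AP_def by auto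
    have "\<exists>q\<in>Qfam N. (\<integral>x. (q x - g x)\<^sup>2 \<partial>M) < e/4" by (rule B[rule_format]) (use e in simp)
    then obtain q2 where q2: "q2 \<in> Qfam N" "(\<integral>x. (q2 x - g x)\<^sup>2 \<partial>M) < e/4" by blast
    have m1: "q1 \<in> borel_measurable M" "integrable M (\<lambda>x. (q1 x)\<^sup>2)" using q_meas[OF q1(1)] q_sqint[OF q1(1)] by auto
    have m2: "q2 \<in> borel_measurable M" "integrable M (\<lambda>x. (q2 x)\<^sup>2)" using q_meas[OF q2(1)] q_sqint[OF q2(1)] by auto
    have "(\<integral>x. ((q1 x + q2 x) - (f x + g x))\<^sup>2 \<partial>M) = (\<integral>x. ((q1 x - f x) + (q2 x - g x))\<^sup>2 \<partial>M)"
      by (simp add: algebra_simps)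
    also have "\<dots> \<le> 2 * (\<integral>x. (q1 x - f x)\<^sup>2 \<partial>M) + 2 * (\<integral>x. (q2 x - g x)\<^sup>2 \<partial>M)"
      by (rule sum2_ineq) (use m1 m2 fm gm in \<open>auto intro: diff_sqint\<close>)
    also have "\<dots> < e" using q1(2) q2(2) by linarith
    finally have I: "(\<integral>x. ((q1 x + q2 x) - (f x + g x))\<^sup>2 \<partial>M) < e" .
    show "\<exists>q\<in>Qfam N. (\<integral>x. (q x - (f x + g x))\<^sup>2 \<partial>M) < e"
      using I by (intro bexI[OF _ Qfam_add[OF q1(1) q2(1)]]) simp
  qed
qed

lemma AP_smul:
  assumes f: "AP f"
  shows "AP (\<lambda>x. r * f x)"
proof -
  have fm: "f \<in> borel_measurable M" "integrable M (\<lambda>x. (f x)\<^sup>2)" using f unfolding AP_def by auto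
  show ?thesis unfolding AP_def
  proof (intro conjI allI impI)
    show "(\<lambda>x. r * f x) \<in> borel_measurable M" using fm by measurable
    show "integrable M (\<lambda>x. (r * f x)\<^sup>2)" using fm by (simp add: power_mult_distrib)
    fix e :: real assume e: "e > 0"
    have rp: "r\<^sup>2 + 1 > 0" using zero_le_power2[of r] by linarith
    have e': "e / (r\<^sup>2 + 1) > 0" using e rp by simp
    have "\<forall>e>0. \<exists>q\<in>Qfam N. (\<integral>x. (q x - f x)\<^sup>2 \<partial>M) < e" using f unfolding AP_def by auto
    hence "\<exists>q\<in>Qfam N. (\<integral>x. (q x - f x)\<^sup>2 \<partial>M) < e / (r\<^sup>2 + 1)" using e' by blast
    then obtain q where q: "q \<in> Qfam N" "(\<integral>x. (q x - f x)\<^sup>2 \<partial>M) < e / (r\<^sup>2 + 1)" by blast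
    have I0: "(\<integral>x. (q x - f x)\<^sup>2 \<partial>M) \<ge> 0" by simp
    have "(\<integral>x. (r * q x - r * f x)\<^sup>2 \<partial>M) = (\<integral>x. r\<^sup>2 * (q x - f x)\<^sup>2 \<partial>M)"
      by (simp add: power_mult_distrib right_diff_distrib[symmetric])
    also have "\<dots> = r\<^sup>2 * (\<integral>x. (q x - f x)\<^sup>2 \<partial>M)" by simp
    also have "\<dots> \<le> (r\<^sup>2 + 1) * (\<integral>x. (q x - f x)\<^sup>2 \<partial>M)" using I0 by (simp add: mult_right_mono)
    also have "\<dots> < (r\<^sup>2 + 1) * (e / (r\<^sup>2 + 1))" using q(2) rp by (intro mult_strict_left_mono) auto
    also have "\<dots> = e" using rp by simp
    finally have I: "(\<integral>x. (r * q x - r * f x)\<^sup>2 \<partial>M) < e" .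
    show "\<exists>q\<in>Qfam N. (\<integral>x. (q x - r * f x)\<^sup>2 \<partial>M) < e"
      using I by (intro bexI[OF _ Qfam_smul[OF q(1), of r]]) simp
  qed
qed

lemma AP_zero: "AP (\<lambda>x. 0)"
  unfolding AP_def
proof (intro conjI allI impI)
  fix e :: real assume "e > 0"
  thus "\<exists>q\<in>Qfam N. (\<integral>x. (q x - 0)\<^sup>2 \<partial>M) < e" by (intro bexI[OF _ Qfam_zero]) simp
qed simp_all

lemma AP_sum: "finite I \<Longrightarrow> (\<And>i. i \<in> I \<Longrightarrow> AP (f i)) \<Longrightarrow> AP (\<lambda>x. \<Sum>i\<in>I. f i x)"
proof (induction I rule: finite_induct)
  case empty thus ?case using AP_zero by simp
next
  case (insert a F)
  have "AP (\<lambda>x. f a x + (\<Sum>i\<in>F. f i x))" by (rule AP_add) (use insert in auto)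
  thus ?case using insert.hyps by simp
qed

lemma AP_unif:
  assumes \<phi>: "\<phi> \<in> borel_measurable M" "integrable M (\<lambda>x. (\<phi> x)\<^sup>2)"
    and u: "\<And>e. e > 0 \<Longrightarrow> \<exists>q\<in>Qfam N. \<forall>x\<in>space M. \<bar>\<phi> x - q x\<bar> < e"
  shows "AP \<phi>"
  unfolding AP_def
proof (intro conjI allI impI \<phi>)
  fix e :: real assume e: "e > 0"
  define m where "m = measure M (space M)"
  have m0: "m \<ge> 0" unfolding m_def by simp
  define \<eta> where "\<eta> = sqrt (e / (2 * (m + 1)))"
  have \<eta>pos: "\<eta> > 0" unfolding \<eta>_def using e m0 by simp
  have \<eta>2: "\<eta>\<^sup>2 = e / (2 * (m + 1))" unfolding \<eta>_def using e m0 by simp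
  obtain q where q: "q \<in> Qfam N" "\<forall>x\<in>space M. \<bar>\<phi> x - q x\<bar> < \<eta>" using u[OF \<eta>pos] by blast
  have qm: "q \<in> borel_measurable M" "integrable M (\<lambda>x. (q x)\<^sup>2)" using q_meas[OF q(1)] q_sqint[OF q(1)] by auto
  have "(\<integral>x. (q x - \<phi> x)\<^sup>2 \<partial>M) \<le> (\<integral>x. \<eta>\<^sup>2 \<partial>M)"
  proof (rule integral_mono)
    show "integrable M (\<lambda>x. (q x - \<phi> x)\<^sup>2)" by (rule diff_sqint[OF qm \<phi>])
    show "integrable M (\<lambda>x. \<eta>\<^sup>2)" by simp
    fix x assume "x \<in> space M"
    hence "\<bar>q x - \<phi> x\<bar> \<le> \<eta>" using q(2) by (simp add: abs_minus_commute less_imp_le)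
    hence "\<bar>q x - \<phi> x\<bar>\<^sup>2 \<le> \<eta>\<^sup>2" by (intro power_mono) auto
    thus "(q x - \<phi> x)\<^sup>2 \<le> \<eta>\<^sup>2" by simp
  qed
  also have "\<dots> = m * \<eta>\<^sup>2" unfolding m_def by simp
  also have "\<dots> = e * (m / (2 * (m + 1)))" unfolding \<eta>2 by (simp add: field_simps)
  also have "\<dots> < e * 1" using e m0 by (intro mult_strict_left_mono) (auto simp: field_simps)
  finally show "\<exists>q\<in>Qfam N. (\<integral>x. (q x - \<phi> x)\<^sup>2 \<partial>M) < e" using q(1) by auto
qed

lemma AP_cont:
  assumes c: "continuous_on UNIV \<phi>" and b: "\<And>x. \<bar>\<phi> x\<bar> \<le> B"
  shows "AP \<phi>"
proof (rule AP_unif)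
  show pm: "\<phi> \<in> borel_measurable M" by (rule meas_cont[OF c])
  show "integrable M (\<lambda>x. (\<phi> x)\<^sup>2)" using sqint_bounded[OF pm b] by blast
  fix e :: real assume e: "e > 0"
  have "\<phi> \<in> Tset N (Kset N d \<delta>)"
    by (rule cont_T[OF dN \<delta>pos]) (rule continuous_on_subset[OF c], simp)
  hence "\<forall>e>0. \<exists>q\<in>Qfam N. \<forall>x\<in>Kset N d \<delta>. \<bar>\<phi> x - q x\<bar> < e" unfolding Tset_def by simp
  hence "\<exists>q\<in>Qfam N. \<forall>x\<in>Kset N d \<delta>. \<bar>\<phi> x - q x\<bar> < e" using e by blast
  thus "\<exists>q\<in>Qfam N. \<forall>x\<in>space M. \<bar>\<phi> x - q x\<bar> < e" using GK space_M by blast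
qed

end

context apx begin

lemma idm: "(\<lambda>x. x) \<in> measurable M borel"
proof -
  have "(\<lambda>x. x) \<in> measurable (restrict_space borel Gb) borel"
    by (rule measurable_restrict_space1) (rule measurable_ident_sets, rule refl)
  thus ?thesis using measurable_cong_sets[OF sM refl] by blast
qed

lemma AP_ind:
  assumes A: "A \<in> sets M"
  shows "AP (indicator A)"
proof (rule AP_limit)
  show im: "(indicator A :: _ \<Rightarrow> real) \<in> borel_measurable M" using A by simp
  show "integrable M (\<lambda>x. (indicator A x :: real)\<^sup>2)"
    by (rule sqint_bounded[OF im, of 1]) (simp add: indicator_def)
  fix e :: real assume e: "e > 0"
  have "A \<in> (\<inter>) Gb ` sets borel" using A sM by (simp add: sets_restrict_space)
  then obtain B where B: "B \<in> sets borel" "A = Gb \<inter> B" by blast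
  define \<nu> where "\<nu> = distr M borel (\<lambda>x. x)"
  have s\<nu>: "sets \<nu> = sets borel" unfolding \<nu>_def by simp
  have sp\<nu>: "space \<nu> = UNIV" unfolding \<nu>_def by simp
  have e\<nu>: "emeasure \<nu> S = emeasure M (S \<inter> space M)" if "S \<in> sets borel" for S
    unfolding \<nu>_def using emeasure_distr[OF idm that] by simp
  have m\<nu>: "measure \<nu> S = measure M (S \<inter> space M)" if "S \<in> sets borel" for S
    unfolding \<nu>_def using measure_distr[OF idm that] by simp
  have fin: "emeasure \<nu> (space \<nu>) \<noteq> \<infinity>" unfolding sp\<nu> using e\<nu>[of UNIV] by simp
  interpret nu: finite_measure \<nu> by (rule finite_measureI[OF fin])
  define \<eta> where "\<eta> = e / 4"
  have \<eta>pos: "\<eta> > 0" unfolding \<eta>_def using e by simp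
  have Bs: "B \<in> sets \<nu>" using B(1) s\<nu> by simp
  obtain C where C: "compact C" "C \<subseteq> B" "measure \<nu> B < measure \<nu> C + \<eta>"
  proof (cases "measure \<nu> B < \<eta>")
    case True
    show ?thesis by (rule that[of "{}"]) (use True in auto)
  next
    case False
    have "ennreal (measure \<nu> B - \<eta>) < ennreal (measure \<nu> B)"
      using False \<eta>pos by (subst ennreal_less_iff) auto
    also have "\<dots> = emeasure \<nu> B" by (simp add: nu.emeasure_eq_measure)
    also have "\<dots> = (SUP K \<in> {K. K \<subseteq> B \<and> compact K}. emeasure \<nu> K)"
      by (rule inner_regular[OF s\<nu> fin B(1)])
    finally obtain K where K: "K \<subseteq> B" "compact K" "ennreal (measure \<nu> B - \<eta>) < emeasure \<nu> K"
      by (auto simp: less_SUP_iff)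
    have "emeasure \<nu> K = ennreal (measure \<nu> K)" by (simp add: nu.emeasure_eq_measure)
    with K(3) have "ennreal (measure \<nu> B - \<eta>) < ennreal (measure \<nu> K)" by simp
    moreover have "0 \<le> measure \<nu> B - \<eta>" using False by simp
    ultimately have "measure \<nu> B - \<eta> < measure \<nu> K" using ennreal_less_iff by blast
    thus ?thesis using that[of K] K by auto
  qed
  obtain U where U: "open U" "B \<subseteq> U" "measure \<nu> U < measure \<nu> B + \<eta>"
  proof -
    have "(INF U \<in> {U. B \<subseteq> U \<and> open U}. emeasure \<nu> U) = emeasure \<nu> B"
      by (rule outer_regular[OF s\<nu> fin B(1), symmetric])
    also have "\<dots> = ennreal (measure \<nu> B)" by (simp add: nu.emeasure_eq_measure)
    also have "\<dots> < ennreal (measure \<nu> B + \<eta>)" using \<eta>pos by (subst ennreal_less_iff) auto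
    finally obtain V where V: "B \<subseteq> V" "open V" "emeasure \<nu> V < ennreal (measure \<nu> B + \<eta>)"
      by (auto simp: INF_less_iff)
    have "emeasure \<nu> V = ennreal (measure \<nu> V)" by (simp add: nu.emeasure_eq_measure)
    with V(3) have "ennreal (measure \<nu> V) < ennreal (measure \<nu> B + \<eta>)" by simp
    hence "measure \<nu> V < measure \<nu> B + \<eta>" using ennreal_less_iff[of "measure \<nu> V"] by simp
    thus ?thesis using that[of V] V by auto
  qed
  have Cc: "closed C" using C(1) by (rule compact_imp_closed)
  have CU: "C \<subseteq> U" using C(2) U(2) by auto
  have UCs: "U - C \<in> sets borel" using U(1) Cc by auto
  have mUC: "measure \<nu> (U - C) < 2 * \<eta>"
  proof -
    have "measure \<nu> (U - C) = measure \<nu> U - measure \<nu> C"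
      using U(1) Cc CU s\<nu> by (intro measure_Diff) (auto simp: nu.emeasure_finite)
    thus ?thesis using C(3) U(3) by linarith
  qed
  have nrm: "normal_space (euclidean :: (nat \<Rightarrow> complex) topology)"
    by (rule metrizable_imp_normal_space[OF metrizable_space_euclidean])
  obtain \<phi> :: "(nat \<Rightarrow> complex) \<Rightarrow> real" where
    \<phi>c: "continuous_map euclidean (top_of_set {0..1}) \<phi>" and \<phi>0: "\<phi> ` (- U) \<subseteq> {0}" and \<phi>1: "\<phi> ` C \<subseteq> {1}"
  proof (rule Urysohn_lemma[OF nrm, of "- U" C 0 1])
    show "closedin euclidean (- U)" using U(1) by (simp add: closed_closedin[symmetric] closed_Compl)
    show "closedin euclidean C" using Cc by (simp add: closed_closedin[symmetric])
    show "disjnt (- U) C" using CU by (auto simp: disjnt_def)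
  qed (auto intro: that)
  have \<phi>cont: "continuous_on UNIV \<phi>"
    using continuous_map_into_fulltopology[OF \<phi>c] by simp
  have \<phi>01: "\<phi> x \<in> {0..1}" for x
  proof -
    have "range \<phi> \<subseteq> {0..1}" using continuous_map_image_subset_topspace[OF \<phi>c] by simp
    thus ?thesis by blast
  qed
  have \<phi>b: "\<bar>\<phi> x\<bar> \<le> 1" for x using \<phi>01[of x] by auto
  have AP\<phi>: "AP \<phi>" by (rule AP_cont[OF \<phi>cont \<phi>b])
  have \<phi>m: "\<phi> \<in> borel_measurable M" by (rule meas_cont[OF \<phi>cont])
  have \<phi>sq: "integrable M (\<lambda>x. (\<phi> x)\<^sup>2)" by (rule sqint_bounded[OF \<phi>m \<phi>b])
  have isq: "integrable M (\<lambda>x. (indicator A x :: real)\<^sup>2)"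
    by (rule sqint_bounded[OF im, of 1]) (simp add: indicator_def)
  define D where "D = (U - C) \<inter> space M"
  have Ds: "D \<in> sets M"
  proof -
    have "D \<in> (\<inter>) Gb ` sets borel" unfolding D_def space_M using UCs by auto
    thus ?thesis using sM by (simp add: sets_restrict_space)
  qed
  have "(\<integral>x. (\<phi> x - indicator A x)\<^sup>2 \<partial>M) \<le> (\<integral>x. indicator D x \<partial>M)"
  proof (rule integral_mono)
    show "integrable M (\<lambda>x. (\<phi> x - indicator A x)\<^sup>2)" by (rule diff_sqint[OF \<phi>m \<phi>sq im isq])
    show "integrable M (\<lambda>x. indicator D x :: real)"
      by (rule integrable_const_bound[where B=1]) (use Ds in \<open>auto simp: indicator_def[symmetric]\<close>)
    fix x assume x: "x \<in> space M"
    hence xG: "x \<in> Gb" using space_M by simp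
    show "(\<phi> x - indicator A x)\<^sup>2 \<le> (indicator D x :: real)"
    proof (cases "x \<in> C")
      case True
      hence "x \<in> A" using C(2) B(2) xG by auto
      moreover have "\<phi> x = 1" using \<phi>1 True by auto
      ultimately show ?thesis by (simp add: indicator_def)
    next
      case False
      show ?thesis
      proof (cases "x \<in> U")
        case False
        hence "x \<notin> A" using U(2) B(2) by auto
        moreover have "\<phi> x = 0" using \<phi>0 False by auto
        ultimately show ?thesis by (simp add: indicator_def)
      next
        case True
        hence "x \<in> D" unfolding D_def using \<open>x \<notin> C\<close> x by auto
        moreover have "(\<phi> x - indicator A x)\<^sup>2 \<le> 1"
        proof -
          have "\<bar>\<phi> x - indicator A x\<bar> \<le> 1" using \<phi>01[of x] by (auto simp: indicator_def)
          hence "\<bar>\<phi> x - indicator A x\<bar>\<^sup>2 \<le> 1\<^sup>2" by (intro power_mono) auto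
          thus ?thesis by simp
        qed
        ultimately show ?thesis by simp
      qed
    qed
  qed
  also have "(\<integral>x. indicator D x \<partial>M) = measure M D" using Ds by (simp add: D_def Int_absorb2)
  also have "measure M D = measure \<nu> (U - C)" unfolding D_def using m\<nu>[OF UCs] by simp
  also have "\<dots> < e" using mUC measure_nonneg[of \<nu> "U - C"] unfolding \<eta>_def by linarith
  finally show "\<exists>h. AP h \<and> (\<integral>x. (h x - indicator A x)\<^sup>2 \<partial>M) < e" using AP\<phi> by blast
qed

end

context apx begin

lemma AP_bounded:
  assumes fm: "f \<in> borel_measurable M" and fb: "\<And>x. x \<in> space M \<Longrightarrow> \<bar>f x\<bar> \<le> Bd"
  shows "AP f"
proof (rule AP_limit[OF fm sqint_bounded[OF fm fb]])
  fix e :: real assume e: "e > 0"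
  define m where "m = measure M (space M)"
  have m0: "m \<ge> 0" unfolding m_def by simp
  obtain n :: nat where n: "m / e < real n" using reals_Archimedean2 by blast
  define k where "k = Suc n"
  have k1: "real k \<ge> 1" unfolding k_def by simp
  have kpos: "real k > 0" using k1 by simp
  have mk: "m < e * real k" using n e unfolding k_def by (simp add: divide_less_eq algebra_simps)
  define L :: int where "L = \<lceil>Bd * real k\<rceil> + 1"
  define J where "J = {-L..L}"
  define S where "S j = {x \<in> space M. \<lfloor>f x * real k\<rfloor> = j}" for j :: int
  define h where "h x = (\<Sum>j\<in>J. (real_of_int j / real k) * indicator (S j) x)" for x
  have Ss: "S j \<in> sets M" for j
  proof -
    have "S j = {x \<in> space M. real_of_int j \<le> f x * real k \<and> f x * real k < real_of_int j + 1}"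
      unfolding S_def by (simp add: floor_eq_iff)
    also have "\<dots> \<in> sets M" using fm by measurable
    finally show ?thesis .
  qed
  have APh: "AP h"
    unfolding h_def
  proof (rule AP_sum)
    show "finite J" unfolding J_def by simp
    fix j assume "j \<in> J"
    show "AP (\<lambda>x. real_of_int j / real k * indicator (S j) x)"
      by (rule AP_smul[OF AP_ind[OF Ss]])
  qed
  have hx: "h x = real_of_int \<lfloor>f x * real k\<rfloor> / real k" if x: "x \<in> space M" for x
  proof -
    let ?j0 = "\<lfloor>f x * real k\<rfloor>"
    have b: "\<bar>f x * real k\<bar> \<le> Bd * real k" using fb[OF x] kpos by (simp add: abs_mult)
    have "?j0 \<in> J"
    proof -
      have a1: "real_of_int ?j0 \<le> f x * real k" by simp
      have a2: "f x * real k < real_of_int ?j0 + 1" by simp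
      have a3: "Bd * real k \<le> real_of_int \<lceil>Bd * real k\<rceil>" by simp
      have a4: "f x * real k \<le> Bd * real k" "- (f x * real k) \<le> Bd * real k" using b by (auto simp: abs_le_iff)
      have "real_of_int ?j0 \<le> real_of_int L" "real_of_int (-L) \<le> real_of_int ?j0"
        unfolding L_def using a1 a2 a3 a4 by simp_all linarith+
      thus ?thesis unfolding J_def by simp
    qed
    have "h x = (\<Sum>j\<in>J. if j = ?j0 then real_of_int ?j0 / real k else 0)"
      unfolding h_def by (intro sum.cong refl) (use x in \<open>auto simp: S_def indicator_def\<close>)
    also have "\<dots> = real_of_int ?j0 / real k" using \<open>?j0 \<in> J\<close> unfolding J_def by simp
    finally show ?thesis .
  qed
  have hm: "h \<in> borel_measurable M" and hsq: "integrable M (\<lambda>x. (h x)\<^sup>2)"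
    using APh unfolding AP_def by auto
  have fsq: "integrable M (\<lambda>x. (f x)\<^sup>2)" by (rule sqint_bounded[OF fm fb])
  have "(\<integral>x. (h x - f x)\<^sup>2 \<partial>M) \<le> (\<integral>x. (1 / real k)\<^sup>2 \<partial>M)"
  proof (rule integral_mono)
    show "integrable M (\<lambda>x. (h x - f x)\<^sup>2)" by (rule diff_sqint[OF hm hsq fm fsq])
    show "integrable M (\<lambda>x. (1 / real k)\<^sup>2)" by simp
    fix x assume x: "x \<in> space M"
    have "h x - f x = (real_of_int \<lfloor>f x * real k\<rfloor> - f x * real k) / real k"
      unfolding hx[OF x] using kpos by (simp add: field_simps)
    moreover have "\<bar>real_of_int \<lfloor>f x * real k\<rfloor> - f x * real k\<bar> \<le> 1"
      by (simp add: abs_le_iff) linarith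
    ultimately have "\<bar>h x - f x\<bar> \<le> 1 / real k" using kpos by (simp add: divide_right_mono abs_div_pos)
    hence "\<bar>h x - f x\<bar>\<^sup>2 \<le> (1 / real k)\<^sup>2" by (intro power_mono) auto
    thus "(h x - f x)\<^sup>2 \<le> (1 / real k)\<^sup>2" by simp
  qed
  also have "\<dots> = m * (1 / real k)\<^sup>2" unfolding m_def by simp
  also have "\<dots> \<le> m * (1 / real k)"
  proof (rule mult_left_mono[OF _ m0])
    have "1 / real k \<le> 1" using k1 by simp
    hence "(1 / real k) * (1 / real k) \<le> 1 * (1 / real k)" by (intro mult_right_mono) auto
    thus "(1 / real k)\<^sup>2 \<le> 1 / real k" by (simp add: power2_eq_square)
  qed
  also have "\<dots> < e" using mk kpos by (simp add: field_simps)
  finally show "\<exists>h. AP h \<and> (\<integral>x. (h x - f x)\<^sup>2 \<partial>M) < e" using APh by blast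
qed

lemma AP_all:
  assumes fm: "f \<in> borel_measurable M" and fsq: "integrable M (\<lambda>x. (f x)\<^sup>2)"
  shows "AP f"
proof (rule AP_limit[OF fm fsq])
  fix e :: real assume e: "e > 0"
  define tr where "tr i x = max (- real i) (min (real i) (f x))" for i :: nat and x
  have trm: "tr i \<in> borel_measurable M" for i unfolding tr_def using fm by measurable
  have trb: "\<bar>tr i x\<bar> \<le> real i" for i x unfolding tr_def by auto
  have bnd: "(tr i x - f x)\<^sup>2 \<le> (f x)\<^sup>2" for i x
  proof -
    have "\<bar>tr i x - f x\<bar> \<le> \<bar>f x\<bar>" unfolding tr_def by auto
    thus ?thesis by (simp add: abs_le_square_iff)
  qed
  have lim: "(\<lambda>i. \<integral>x. (tr i x - f x)\<^sup>2 \<partial>M) \<longlonglongrightarrow> (\<integral>x. 0 \<partial>M)"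
  proof (rule integral_dominated_convergence[where w="\<lambda>x. (f x)\<^sup>2"])
    show "(\<lambda>x. 0::real) \<in> borel_measurable M" by simp
    show "\<And>i. (\<lambda>x. (tr i x - f x)\<^sup>2) \<in> borel_measurable M" using trm fm by measurable
    show "integrable M (\<lambda>x. (f x)\<^sup>2)" by (rule fsq)
    show "AE x in M. (\<lambda>i. (tr i x - f x)\<^sup>2) \<longlonglongrightarrow> 0"
    proof (rule AE_I2)
      fix x
      have "eventually (\<lambda>i. (tr i x - f x)\<^sup>2 = 0) sequentially"
      proof (rule eventually_sequentiallyI[of "nat \<lceil>\<bar>f x\<bar>\<rceil>"])
        fix i assume "nat \<lceil>\<bar>f x\<bar>\<rceil> \<le> i"
        hence "\<bar>f x\<bar> \<le> real i" by linarith
        thus "(tr i x - f x)\<^sup>2 = 0" unfolding tr_def by auto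
      qed
      thus "(\<lambda>i. (tr i x - f x)\<^sup>2) \<longlonglongrightarrow> 0" by (rule tendsto_eventually)
    qed
    show "\<And>i. AE x in M. norm ((tr i x - f x)\<^sup>2) \<le> (f x)\<^sup>2"
      using bnd by simp
  qed
  hence "(\<lambda>i. \<integral>x. (tr i x - f x)\<^sup>2 \<partial>M) \<longlonglongrightarrow> 0" by simp
  hence "eventually (\<lambda>i. (\<integral>x. (tr i x - f x)\<^sup>2 \<partial>M) < e) sequentially"
    using e by (rule order_tendstoD(2))
  then obtain i where i: "(\<integral>x. (tr i x - f x)\<^sup>2 \<partial>M) < e" by (auto simp: eventually_sequentially)
  have "AP (tr i)" by (rule AP_bounded[OF trm trb])
  thus "\<exists>h. AP h \<and> (\<integral>x. (h x - f x)\<^sup>2 \<partial>M) < e" using i by blast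
qed

end

lemma amp_in_K:
  fixes x :: "nat \<Rightarrow> real"
  assumes dN: "d < N" and k1: "0 < \<kappa>1" and xb: "\<kappa>1 \<le> vnorm d x" "vnorm d x \<le> \<kappa>2"
  shows "amp_enc d x \<in> Kset N d (sqrt (1 / ((1 + \<kappa>2)\<^sup>2 + 1)))"
proof -
  define r where "r = vnorm d x"
  define xt where "xt = r / (1 + r)"
  define \<gamma> where "\<gamma> = sqrt (r\<^sup>2 + xt\<^sup>2)"
  have rpos: "r > 0" using k1 xb unfolding r_def by linarith
  have r2: "r\<^sup>2 = (\<Sum>i<d. (x i)\<^sup>2)" unfolding r_def vnorm_def by (simp add: sum_nonneg)
  have xtpos: "xt > 0" unfolding xt_def using rpos by simp
  have g2: "\<gamma>\<^sup>2 = r\<^sup>2 + xt\<^sup>2" unfolding \<gamma>_def by simp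
  have gpos: "\<gamma> > 0" unfolding \<gamma>_def using rpos by (intro real_sqrt_gt_zero add_pos_nonneg) auto
  define F where "F = amp_enc d x"
  have F: "F i = (if i < d then complex_of_real (x i / \<gamma>) else if i = d then complex_of_real (xt / \<gamma>) else 0)" for i
    unfolding F_def amp_enc_def Let_def r_def xt_def \<gamma>_def by simp
  define g where "g i = (cmod (F i))\<^sup>2" for i
  have sum1: "(\<Sum>i<N. g i) = 1"
  proof -
    have "(\<Sum>i<N. g i) = (\<Sum>i<Suc d. g i)"
      by (rule sum.mono_neutral_right) (use dN in \<open>auto simp: g_def F\<close>)
    also have "\<dots> = (\<Sum>i<d. (x i / \<gamma>)\<^sup>2) + (xt / \<gamma>)\<^sup>2"
      by (simp add: g_def F power_divide del: of_real_divide)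
    also have "(\<Sum>i<d. (x i / \<gamma>)\<^sup>2) = r\<^sup>2 / \<gamma>\<^sup>2"
      unfolding r2 by (simp add: power_divide sum_divide_distrib)
    also have "r\<^sup>2 / \<gamma>\<^sup>2 + (xt / \<gamma>)\<^sup>2 = (r\<^sup>2 + xt\<^sup>2) / \<gamma>\<^sup>2" by (simp add: power_divide add_divide_distrib)
    also have "\<dots> = 1" using g2 gpos rpos by simp
    finally show ?thesis .
  qed
  have "(xt / \<gamma>)\<^sup>2 = xt\<^sup>2 / (r\<^sup>2 + xt\<^sup>2)" using g2 by (simp add: power_divide)
  also have "\<dots> = 1 / ((1 + r)\<^sup>2 + 1)"
  proof -
    have hr: "r = xt * (1 + r)" unfolding xt_def using rpos by simp
    have "r\<^sup>2 = (xt * (1 + r))\<^sup>2" using arg_cong[of _ _ "\<lambda>t. t\<^sup>2", OF hr] .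
    also have "\<dots> = xt\<^sup>2 * (1 + r)\<^sup>2" by (rule power_mult_distrib)
    finally have "r\<^sup>2 + xt\<^sup>2 = xt\<^sup>2 * (1 + r)\<^sup>2 + xt\<^sup>2 * 1" by simp
    hence "r\<^sup>2 + xt\<^sup>2 = xt\<^sup>2 * ((1 + r)\<^sup>2 + 1)" by (simp only: distrib_left)
    thus ?thesis using xtpos by simp
  qed
  finally have q2: "(xt / \<gamma>)\<^sup>2 = 1 / ((1 + r)\<^sup>2 + 1)" .
  have Fd: "Re (F d) = xt / \<gamma>" by (simp add: F)
  have "xt / \<gamma> = sqrt ((xt / \<gamma>)\<^sup>2)" using xtpos gpos by simp
  also have "\<dots> = sqrt (1 / ((1 + r)\<^sup>2 + 1))" unfolding q2 ..
  also have "\<dots> \<ge> sqrt (1 / ((1 + \<kappa>2)\<^sup>2 + 1))"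
  proof (rule real_sqrt_le_mono)
    have "(1 + r)\<^sup>2 \<le> (1 + \<kappa>2)\<^sup>2" using rpos xb unfolding r_def by (intro power_mono) auto
    hence le: "(1 + r)\<^sup>2 + 1 \<le> (1 + \<kappa>2)\<^sup>2 + 1" by linarith
    have p1: "0 < (1 + \<kappa>2)\<^sup>2 + 1" using zero_le_power2[of "1 + \<kappa>2"] by linarith
    have p2: "0 < (1 + r)\<^sup>2 + 1" using zero_le_power2[of "1 + r"] by linarith
    have pp: "0 < ((1 + \<kappa>2)\<^sup>2 + 1) * ((1 + r)\<^sup>2 + 1)" using p1 p2 by (rule mult_pos_pos)
    show "1 / ((1 + \<kappa>2)\<^sup>2 + 1) \<le> 1 / ((1 + r)\<^sup>2 + 1)"
      by (rule divide_left_mono[OF le _ pp]) simp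
  qed
  finally have dlow: "sqrt (1 / ((1 + \<kappa>2)\<^sup>2 + 1)) \<le> Re (F d)" using Fd by simp
  have cm: "cmod (F i) \<le> 1" for i
  proof (cases "i < N")
    case True
    have "g i \<le> (\<Sum>i<N. g i)" using True by (intro member_le_sum) (auto simp: g_def)
    hence "(cmod (F i))\<^sup>2 \<le> 1\<^sup>2" using sum1 by (simp add: g_def)
    thus ?thesis by (rule power2_le_imp_le) simp
  next
    case False thus ?thesis using dN by (simp add: F)
  qed
  show ?thesis
    unfolding F_def[symmetric] Kset_def
    using cm dlow sum1 dN unfolding g_def by (auto simp: F)
qed

theorem theorem1:
  fixes d n :: nat and \<kappa>1 \<kappa>2 :: real
    and G :: "(nat \<Rightarrow> real) set"
    and \<mu> :: "(nat \<Rightarrow> complex) measure"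
    and f :: "(nat \<Rightarrow> complex) \<Rightarrow> real"
    and \<epsilon> :: real
  assumes "0 < d" and "0 < n" and "d + 1 \<le> 2 ^ n"
    and "0 < \<kappa>1" and "\<kappa>1 \<le> \<kappa>2"
    and "\<forall>x\<in>G. \<forall>i\<ge>d. x i = 0"
    and "\<forall>x\<in>G. \<kappa>1 \<le> vnorm d x \<and> vnorm d x \<le> \<kappa>2"
    and "finite_measure \<mu>"
    and "sets \<mu> = sets (restrict_space borel (amp_enc d ` G))"
    and "f \<in> borel_measurable \<mu>"
    and "integrable \<mu> (\<lambda>x. (f x)\<^sup>2)"
    and "0 < \<epsilon>"
  shows "\<exists>q\<in>Qfam (2 ^ n). (\<integral>x. (q x - f x)\<^sup>2 \<partial>\<mu>) < \<epsilon>"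
proof -
  define \<delta> where "\<delta> = sqrt (1 / ((1 + \<kappa>2)\<^sup>2 + 1))"
  have \<delta>pos: "0 < \<delta>" unfolding \<delta>_def by (simp add: add_nonneg_pos)
  have dN: "d < 2 ^ n" using assms(3) by simp
  have GK: "amp_enc d ` G \<subseteq> Kset (2 ^ n) d \<delta>"
  proof
    fix y assume "y \<in> amp_enc d ` G"
    then obtain x where x: "x \<in> G" "y = amp_enc d x" by blast
    show "y \<in> Kset (2 ^ n) d \<delta>" unfolding x(2) \<delta>_def
      by (rule amp_in_K[OF dN assms(4)]) (use assms(7) x(1) in auto)
  qed
  interpret A: apx \<mu> "2 ^ n" d \<delta> "amp_enc d ` G"
  proof -
    interpret finite_measure \<mu> by (rule assms(8))
    show "apx \<mu> (2 ^ n) d \<delta> (amp_enc d ` G)"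
      by unfold_locales (use assms(9) GK dN \<delta>pos in auto)
  qed
  have "A.AP f" by (rule A.AP_all[OF assms(10) assms(11)])
  hence "\<forall>e>0. \<exists>q\<in>Qfam (2 ^ n). (\<integral>x. (q x - f x)\<^sup>2 \<partial>\<mu>) < e" unfolding A.AP_def by blast
  thus ?thesis using assms(12) by blast
qed

end
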